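(* For $n=1$, the Kähler-Ricci soliton metric $g$ described in the context satisfies, for every tangent 2-plane $\alpha$ at every point, $$-\tfrac23<\mathrm{Sec}(\alpha)<0,$$ and both bounds are sharp (the infimum of sectional curvatures over $M$ is $-2/3$ and the supremum is $0$).
   Context: $\mathcal H_3$ is the 3-dimensional Heisenberg group with coordinates $(x,y,z)$ and left-invariant coframe $\sigma=dx$, $\rho=dy$, $\zeta=x\,dy-dz$. $F_1(\phi)=\frac{4}{\phi}\big[1-\phi+\frac{\phi^2}{2}-e^{-\phi}\big]$ for $\phi>0$. On $M=\mathcal H_3\times(0,\infty)$, with $\phi$ the coordinate on $(0,\infty)$, $g=\phi(\sigma^2+\rho^2)+F_1(\phi)\zeta^2+\frac{1}{F_1(\phi)}d\phi^2$; this is a complete Kähler metric (Kähler form $d(\phi\zeta)$) which together with $f=-\phi$ is an expanding gradient Kähler-Ricci soliton, $\mathrm{Ric}+\nabla df=-g$. *)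

theory Defs
  imports "HOL-Analysis.Analysis"
begin

text \<open>Coordinates on M = H_3 x (0,oo) as points of real^4:
  p$0 = x, p$1 = y, p$2 = z, p$3 = phi.\<close>

type_synonym pt = "real ^ 4"
type_synonym metric = "pt \<Rightarrow> real ^ 4 ^ 4"

definition F1 :: "real \<Rightarrow> real" where
  "F1 \<phi> = 4 / \<phi> * (1 - \<phi> + \<phi>^2 / 2 - exp (- \<phi>))"

definition M :: "pt set" where
  "M = {p. p $ 3 > 0}"

text \<open>Left-invariant coframe on H_3 and d phi, as covectors (coefficients w.r.t. dx,dy,dz,dphi).\<close>
definition cf_sigma :: "pt \<Rightarrow> real ^ 4" where
  "cf_sigma p = (\<chi> i. if i = 0 then 1 else 0)"
definition cf_rho :: "pt \<Rightarrow> real ^ 4" where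
  "cf_rho p = (\<chi> i. if i = 1 then 1 else 0)"
definition cf_zeta :: "pt \<Rightarrow> real ^ 4" where
  "cf_zeta p = (\<chi> i. if i = 1 then p $ 0 else if i = 2 then -1 else 0)"
definition cf_dphi :: "pt \<Rightarrow> real ^ 4" where
  "cf_dphi p = (\<chi> i. if i = 3 then 1 else 0)"

definition soliton_metric :: metric where
  "soliton_metric p = (\<chi> i j.
      p $ 3 * (cf_sigma p $ i * cf_sigma p $ j + cf_rho p $ i * cf_rho p $ j)
    + F1 (p $ 3) * (cf_zeta p $ i * cf_zeta p $ j)
    + 1 / F1 (p $ 3) * (cf_dphi p $ i * cf_dphi p $ j))"

definition pd :: "(pt \<Rightarrow> real) \<Rightarrow> 4 \<Rightarrow> pt \<Rightarrow> real" where
  "pd f i p = deriv (\<lambda>t. f (p + t *\<^sub>R axis i 1)) 0"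

definition christoffel :: "metric \<Rightarrow> pt \<Rightarrow> 4 \<Rightarrow> 4 \<Rightarrow> 4 \<Rightarrow> real" where
  "christoffel G p k i j = 1/2 * (\<Sum>l\<in>UNIV. matrix_inv (G p) $ k $ l *
      (pd (\<lambda>q. G q $ j $ l) i p + pd (\<lambda>q. G q $ i $ l) j p - pd (\<lambda>q. G q $ i $ j) l p))"

text \<open>R(d_i,d_j) d_k = sum_l riem i j k l d_l, with R(X,Y)Z = nabla_X nabla_Y Z - nabla_Y nabla_X Z - nabla_[X,Y] Z.\<close>
definition riem :: "metric \<Rightarrow> pt \<Rightarrow> 4 \<Rightarrow> 4 \<Rightarrow> 4 \<Rightarrow> 4 \<Rightarrow> real" where
  "riem G p i j k l =
     pd (\<lambda>q. christoffel G q l j k) i p - pd (\<lambda>q. christoffel G q l i k) j p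
   + (\<Sum>m\<in>UNIV. christoffel G p m j k * christoffel G p l i m
               - christoffel G p m i k * christoffel G p l j m)"

definition gprod :: "metric \<Rightarrow> pt \<Rightarrow> real ^ 4 \<Rightarrow> real ^ 4 \<Rightarrow> real" where
  "gprod G p u v = (\<Sum>i\<in>UNIV. \<Sum>j\<in>UNIV. G p $ i $ j * u $ i * v $ j)"

definition sec_curv :: "metric \<Rightarrow> pt \<Rightarrow> real ^ 4 \<Rightarrow> real ^ 4 \<Rightarrow> real" where
  "sec_curv G p u v =
     (\<Sum>i\<in>UNIV. \<Sum>j\<in>UNIV. \<Sum>k\<in>UNIV. \<Sum>l\<in>UNIV. \<Sum>m\<in>UNIV.
        u $ i * v $ j * v $ k * riem G p i j k l * G p $ l $ m * u $ m)
     / (gprod G p u u * gprod G p v v - (gprod G p u v)^2)"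

definition plane_pair :: "real ^ 4 \<Rightarrow> real ^ 4 \<Rightarrow> bool" where
  "plane_pair u v \<longleftrightarrow> u \<noteq> v \<and> independent {u, v}"

end

theory Submission
  imports Defs
begin



lemma incr0:
  fixes h h' :: "real \<Rightarrow> real"
  assumes d: "\<And>y. (h has_real_derivative h' y) (at y)" and p: "\<And>y. y > 0 \<Longrightarrow> h' y > 0"
    and x: "x > 0"
  shows "h 0 < h x"
proof (rule DERIV_pos_imp_increasing_open[OF x])
  show "\<And>y. 0 < y \<Longrightarrow> y < x \<Longrightarrow> \<exists>z. (h has_real_derivative z) (at y) \<and> 0 < z"
    using d p by blast
  show "continuous_on {0..x} h"
    by (meson DERIV_isCont continuous_at_imp_continuous_on d)
qed

lemma e1: "(y::real) > 0 \<Longrightarrow> (y+1) * exp (-y) < 1"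
proof -
  assume y: "y > 0"
  have "(\<lambda>y. 1 - (y+1) * exp (-y)) 0 < (\<lambda>y. 1 - (y+1) * exp (-y)) y"
  proof (rule incr0[OF _ _ y])
    fix z :: real
    show "((\<lambda>y. 1 - (y+1) * exp (-y)) has_real_derivative (\<lambda>z. z * exp (-z)) z) (at z)"
      by (auto intro!: derivative_eq_intros simp: algebra_simps power2_eq_square power3_eq_cube)
  next
    fix z :: real assume z: "z > 0"
    show "(\<lambda>z. z * exp (-z)) z > 0" using z 
      by (auto simp: algebra_simps power2_eq_square power3_eq_cube)
  qed
  thus ?thesis by (simp add: algebra_simps)
qed

lemma e0: "(y::real) > 0 \<Longrightarrow> 1 - y < exp (-y)"
proof -
  assume y: "y > 0"
  have "(\<lambda>y. exp (-y) - 1 + y) 0 < (\<lambda>y. exp (-y) - 1 + y) y"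
  proof (rule incr0[OF _ _ y])
    fix z :: real
    show "((\<lambda>y. exp (-y) - 1 + y) has_real_derivative (\<lambda>z. 1 - exp (-z)) z) (at z)"
      by (auto intro!: derivative_eq_intros simp: algebra_simps power2_eq_square power3_eq_cube)
  next
    fix z :: real assume z: "z > 0"
    show "(\<lambda>z. 1 - exp (-z)) z > 0" using z 
      by (auto simp: algebra_simps power2_eq_square power3_eq_cube)
  qed
  thus ?thesis by (simp add: algebra_simps)
qed

lemma ea: "(y::real) > 0 \<Longrightarrow> exp (-y) < 1 - y + y^2/2"
proof -
  assume y: "y > 0"
  have "(\<lambda>y. 1 - y + y^2/2 - exp (-y)) 0 < (\<lambda>y. 1 - y + y^2/2 - exp (-y)) y"
  proof (rule incr0[OF _ _ y])
    fix z :: real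
    show "((\<lambda>y. 1 - y + y^2/2 - exp (-y)) has_real_derivative (\<lambda>z. -1 + z + exp (-z)) z) (at z)"
      by (auto intro!: derivative_eq_intros simp: algebra_simps power2_eq_square power3_eq_cube)
  next
    fix z :: real assume z: "z > 0"
    show "(\<lambda>z. -1 + z + exp (-z)) z > 0" using z e0[OF z]
      by (auto simp: algebra_simps power2_eq_square power3_eq_cube)
  qed
  thus ?thesis by (simp add: algebra_simps)
qed

lemma eb: "(y::real) > 0 \<Longrightarrow> 1 - y + y^2/2 - y^3/6 < exp (-y)"
proof -
  assume y: "y > 0"
  have "(\<lambda>y. exp (-y) - (1 - y + y^2/2 - y^3/6)) 0 < (\<lambda>y. exp (-y) - (1 - y + y^2/2 - y^3/6)) y"
  proof (rule incr0[OF _ _ y])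
    fix z :: real
    show "((\<lambda>y. exp (-y) - (1 - y + y^2/2 - y^3/6)) has_real_derivative (\<lambda>z. - exp (-z) + 1 - z + z^2/2) z) (at z)"
      by (auto intro!: derivative_eq_intros simp: algebra_simps power2_eq_square power3_eq_cube)
  next
    fix z :: real assume z: "z > 0"
    show "(\<lambda>z. - exp (-z) + 1 - z + z^2/2) z > 0" using z ea[OF z]
      by (auto simp: algebra_simps power2_eq_square power3_eq_cube)
  qed
  thus ?thesis by (simp add: algebra_simps)
qed

lemma eh: "(y::real) > 0 \<Longrightarrow> exp (-y) < 1 - y + y^2/2 - y^3/6 + y^4/24"
proof -
  assume y: "y > 0"
  have "(\<lambda>y. 1 - y + y^2/2 - y^3/6 + y^4/24 - exp (-y)) 0 < (\<lambda>y. 1 - y + y^2/2 - y^3/6 + y^4/24 - exp (-y)) y"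
  proof (rule incr0[OF _ _ y])
    fix z :: real
    show "((\<lambda>y. 1 - y + y^2/2 - y^3/6 + y^4/24 - exp (-y)) has_real_derivative (\<lambda>z. -1 + z - z^2/2 + z^3/6 + exp (-z)) z) (at z)"
      by (auto intro!: derivative_eq_intros simp: algebra_simps power2_eq_square power3_eq_cube)
  next
    fix z :: real assume z: "z > 0"
    show "(\<lambda>z. -1 + z - z^2/2 + z^3/6 + exp (-z)) z > 0" using z eb[OF z]
      by (auto simp: algebra_simps power2_eq_square power3_eq_cube)
  qed
  thus ?thesis by (simp add: algebra_simps)
qed

lemma ec: "(y::real) > 0 \<Longrightarrow> exp (-y) * (y^2 + 2*y + 2) < 2"
proof -
  assume y: "y > 0"
  have "(\<lambda>y. 2 - exp (-y) * (y^2 + 2*y + 2)) 0 < (\<lambda>y. 2 - exp (-y) * (y^2 + 2*y + 2)) y"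
  proof (rule incr0[OF _ _ y])
    fix z :: real
    show "((\<lambda>y. 2 - exp (-y) * (y^2 + 2*y + 2)) has_real_derivative (\<lambda>z. exp (-z) * z^2) z) (at z)"
      by (auto intro!: derivative_eq_intros simp: algebra_simps power2_eq_square power3_eq_cube)
  next
    fix z :: real assume z: "z > 0"
    show "(\<lambda>z. exp (-z) * z^2) z > 0" using z 
      by (auto simp: algebra_simps power2_eq_square power3_eq_cube)
  qed
  thus ?thesis by (simp add: algebra_simps)
qed

lemma ed: "(y::real) > 0 \<Longrightarrow> 2 - exp (-y) * (y^2 + 2*y + 2) < y^3/3"
proof -
  assume y: "y > 0"
  have "(\<lambda>y. y^3/3 - 2 + exp (-y) * (y^2 + 2*y + 2)) 0 < (\<lambda>y. y^3/3 - 2 + exp (-y) * (y^2 + 2*y + 2)) y"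
  proof (rule incr0[OF _ _ y])
    fix z :: real
    show "((\<lambda>y. y^3/3 - 2 + exp (-y) * (y^2 + 2*y + 2)) has_real_derivative (\<lambda>z. z^2 - exp (-z) * z^2) z) (at z)"
      by (auto intro!: derivative_eq_intros simp: algebra_simps power2_eq_square power3_eq_cube)
  next
    fix z :: real assume z: "z > 0"
    show "(\<lambda>z. z^2 - exp (-z) * z^2) z > 0" using z 
      by (auto simp: algebra_simps power2_eq_square power3_eq_cube)
  qed
  thus ?thesis by (simp add: algebra_simps)
qed

lemma ee: "(y::real) > 0 \<Longrightarrow> 0 < y - 2 + (y+2) * exp (-y)"
proof -
  assume y: "y > 0"
  have "(\<lambda>y. y - 2 + (y+2) * exp (-y)) 0 < (\<lambda>y. y - 2 + (y+2) * exp (-y)) y"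
  proof (rule incr0[OF _ _ y])
    fix z :: real
    show "((\<lambda>y. y - 2 + (y+2) * exp (-y)) has_real_derivative (\<lambda>z. 1 - (z+1) * exp (-z)) z) (at z)"
      by (auto intro!: derivative_eq_intros simp: algebra_simps power2_eq_square power3_eq_cube)
  next
    fix z :: real assume z: "z > 0"
    show "(\<lambda>z. 1 - (z+1) * exp (-z)) z > 0" using z e1[OF z]
      by (auto simp: algebra_simps power2_eq_square power3_eq_cube)
  qed
  thus ?thesis by (simp add: algebra_simps)
qed

lemma ef0: "(y::real) > 0 \<Longrightarrow> 0 < 3*y^2 - 6 + 6*(y+1)*exp (-y)"
proof -
  assume y: "y > 0"
  have "(\<lambda>y. 3*y^2 - 6 + 6*(y+1)*exp (-y)) 0 < (\<lambda>y. 3*y^2 - 6 + 6*(y+1)*exp (-y)) y"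
  proof (rule incr0[OF _ _ y])
    fix z :: real
    show "((\<lambda>y. 3*y^2 - 6 + 6*(y+1)*exp (-y)) has_real_derivative (\<lambda>z. 6*z - 6*z*exp (-z)) z) (at z)"
      by (auto intro!: derivative_eq_intros simp: algebra_simps power2_eq_square power3_eq_cube)
  next
    fix z :: real assume z: "z > 0"
    show "(\<lambda>z. 6*z - 6*z*exp (-z)) z > 0" using z 
      by (auto simp: algebra_simps power2_eq_square power3_eq_cube)
  qed
  thus ?thesis by (simp add: algebra_simps)
qed

lemma ef: "(y::real) > 0 \<Longrightarrow> 6 * (y - 2 + (y+2) * exp (-y)) < y^3"
proof -
  assume y: "y > 0"
  have "(\<lambda>y. y^3 - 6 * (y - 2 + (y+2) * exp (-y))) 0 < (\<lambda>y. y^3 - 6 * (y - 2 + (y+2) * exp (-y))) y"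
  proof (rule incr0[OF _ _ y])
    fix z :: real
    show "((\<lambda>y. y^3 - 6 * (y - 2 + (y+2) * exp (-y))) has_real_derivative (\<lambda>z. 3*z^2 - 6 + 6*(z+1)*exp (-z)) z) (at z)"
      by (auto intro!: derivative_eq_intros simp: algebra_simps power2_eq_square power3_eq_cube)
  next
    fix z :: real assume z: "z > 0"
    show "(\<lambda>z. 3*z^2 - 6 + 6*(z+1)*exp (-z)) z > 0" using z ef0[OF z]
      by (auto simp: algebra_simps power2_eq_square power3_eq_cube)
  qed
  thus ?thesis by (simp add: algebra_simps)
qed

lemma eg0: "(y::real) > 0 \<Longrightarrow> 0 < exp y + exp (-y) - 2"
proof -
  assume y: "y > 0"
  have "(\<lambda>y. exp y + exp (-y) - 2) 0 < (\<lambda>y. exp y + exp (-y) - 2) y"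
  proof (rule incr0[OF _ _ y])
    fix z :: real
    show "((\<lambda>y. exp y + exp (-y) - 2) has_real_derivative (\<lambda>z. exp z - exp (-z)) z) (at z)"
      by (auto intro!: derivative_eq_intros simp: algebra_simps power2_eq_square power3_eq_cube)
  next
    fix z :: real assume z: "z > 0"
    show "(\<lambda>z. exp z - exp (-z)) z > 0" using z 
      by (auto simp: algebra_simps power2_eq_square power3_eq_cube)
  qed
  thus ?thesis by (simp add: algebra_simps)
qed

lemma eg1: "(y::real) > 0 \<Longrightarrow> 0 < exp y - exp (-y) - 2*y"
proof -
  assume y: "y > 0"
  have "(\<lambda>y. exp y - exp (-y) - 2*y) 0 < (\<lambda>y. exp y - exp (-y) - 2*y) y"
  proof (rule incr0[OF _ _ y])
    fix z :: real
    show "((\<lambda>y. exp y - exp (-y) - 2*y) has_real_derivative (\<lambda>z. exp z + exp (-z) - 2) z) (at z)"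
      by (auto intro!: derivative_eq_intros simp: algebra_simps power2_eq_square power3_eq_cube)
  next
    fix z :: real assume z: "z > 0"
    show "(\<lambda>z. exp z + exp (-z) - 2) z > 0" using z eg0[OF z]
      by (auto simp: algebra_simps power2_eq_square power3_eq_cube)
  qed
  thus ?thesis by (simp add: algebra_simps)
qed

lemma eg: "(y::real) > 0 \<Longrightarrow> 2 + y^2 < exp y + exp (-y)"
proof -
  assume y: "y > 0"
  have "(\<lambda>y. exp y + exp (-y) - 2 - y^2) 0 < (\<lambda>y. exp y + exp (-y) - 2 - y^2) y"
  proof (rule incr0[OF _ _ y])
    fix z :: real
    show "((\<lambda>y. exp y + exp (-y) - 2 - y^2) has_real_derivative (\<lambda>z. exp z - exp (-z) - 2*z) z) (at z)"
      by (auto intro!: derivative_eq_intros simp: algebra_simps power2_eq_square power3_eq_cube)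
  next
    fix z :: real assume z: "z > 0"
    show "(\<lambda>z. exp z - exp (-z) - 2*z) z > 0" using z eg1[OF z]
      by (auto simp: algebra_simps power2_eq_square power3_eq_cube)
  qed
  thus ?thesis by (simp add: algebra_simps)
qed


definition F1d :: "real \<Rightarrow> real" where
  "F1d y = 4 / y^2 * (y^2/2 - 1 + exp (-y) * (y+1))"
definition F1dd :: "real \<Rightarrow> real" where
  "F1dd y = 4 / y^3 * (2 - exp (-y) * (y^2 + 2*y + 2))"

lemma F1_der: "(y::real) > 0 \<Longrightarrow> (F1 has_real_derivative F1d y) (at y)"
  unfolding F1_def[abs_def] F1d_def
  by (auto intro!: derivative_eq_intros simp: field_simps power2_eq_square)

lemma F1d_der: "(y::real) > 0 \<Longrightarrow> (F1d has_real_derivative F1dd y) (at y)"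
  unfolding F1d_def[abs_def] F1dd_def
  by (auto intro!: derivative_eq_intros simp: field_simps power2_eq_square power3_eq_cube)

lemma F1_chain[derivative_intros]:
  "(g has_real_derivative g') (at x within S) \<Longrightarrow> g x > 0 \<Longrightarrow>
   ((\<lambda>x. F1 (g x)) has_real_derivative F1d (g x) * g') (at x within S)"
  using DERIV_chain2[OF F1_der] by blast

lemma F1d_chain[derivative_intros]:
  "(g has_real_derivative g') (at x within S) \<Longrightarrow> g x > 0 \<Longrightarrow>
   ((\<lambda>x. F1d (g x)) has_real_derivative F1dd (g x) * g') (at x within S)"
  using DERIV_chain2[OF F1d_der] by blast

lemma fa: "(y::real) > 0 \<Longrightarrow> F1 y > 0"
  using ea[of y] unfolding F1_def by (auto intro!: mult_pos_pos)

lemma fb: "(y::real) > 0 \<Longrightarrow> F1 y < 2*y^2/3"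
  using eb[of y] unfolding F1_def by (auto simp: field_simps power2_eq_square power3_eq_cube)

lemma fh: "(y::real) > 0 \<Longrightarrow> 2*y^2/3 - y^3/6 < F1 y"
  using eh[of y] unfolding F1_def by (auto simp: field_simps power2_eq_square power3_eq_cube power4_eq_xxxx)

lemma fc: "(y::real) > 0 \<Longrightarrow> F1dd y > 0"
  using ec[of y] unfolding F1dd_def by (auto intro!: mult_pos_pos)

lemma fd: "(y::real) > 0 \<Longrightarrow> F1dd y < 4/3"
  using ed[of y] unfolding F1dd_def by (auto simp: field_simps power2_eq_square power3_eq_cube)

lemma Rform: "(y::real) > 0 \<Longrightarrow> F1d y * y - F1 y = 4 / y * (y - 2 + (y+2) * exp (-y))"
  unfolding F1d_def F1_def by (simp add: field_simps power2_eq_square)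

lemma fe: "(y::real) > 0 \<Longrightarrow> F1d y * y - F1 y > 0"
  using ee[of y] Rform[of y] by simp

lemma ff: "(y::real) > 0 \<Longrightarrow> F1d y * y - F1 y < 2*y^2/3"
proof -
  assume y: "y > 0"
  have "4 / y * (y - 2 + (y+2) * exp (-y)) < 4 / y * (y^3/6)"
    using ef[OF y] y by (intro mult_strict_left_mono) auto
  also have "\<dots> = 2*y^2/3" using y by (simp add: field_simps power2_eq_square power3_eq_cube)
  finally show ?thesis using Rform[OF y] by simp
qed

lemma fs: "(y::real) > 0 \<Longrightarrow> F1d y * y - F1 y \<le> 8"
proof -
  assume y: "y > 0"
  have "exp (-y) \<le> 1" using y by simp
  hence "(y+2) * exp (-y) \<le> y + 2" using y by (simp add: mult_left_le)
  hence r: "y - 2 + (y+2) * exp (-y) \<le> 2*y" by linarith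
  have "4 / y * (y - 2 + (y+2) * exp (-y)) \<le> 4 / y * (2*y)"
    using y r by (intro mult_left_mono) auto
  thus ?thesis using Rform[OF y] y by simp
qed

lemma fg: "(y::real) > 0 \<Longrightarrow> (F1d y * y - F1 y)^2 < 2 * y^2 * F1 y * F1dd y"
proof -
  assume y: "y > 0"
  define E where "E = exp (-y)"
  have E0: "E > 0" unfolding E_def by simp
  have "exp y = 1 / E" unfolding E_def by (simp add: exp_minus inverse_eq_divide)
  hence "2 + y^2 < 1/E + E" using eg[OF y] by (simp add: E_def)
  hence k: "(2 + y^2) * E < 1 + E^2" using E0 by (simp add: field_simps power2_eq_square)
  define P where "P = 1 - y + y^2/2 - E"
  define Q where "Q = 2 - E * (y^2 + 2*y + 2)"
  define R where "R = y - 2 + (y+2) * E"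
  have id: "2*P*Q - R^2 = y^2 * (E^2 - (y^2+2)*E + 1)"
    unfolding P_def Q_def R_def by (simp add: algebra_simps power2_eq_square)
  have "E^2 - (y^2+2)*E + 1 > 0" using k by (simp add: algebra_simps)
  hence "y^2 * (E^2 - (y^2+2)*E + 1) > 0" using y by simp
  hence "R^2 < 2*P*Q" using id by linarith
  have r: "F1d y * y - F1 y = 4/y * R" using Rform[OF y] unfolding R_def E_def by simp
  have p: "F1 y = 4/y * P" unfolding F1_def P_def E_def by simp
  have q: "F1dd y = 4/y^3 * Q" unfolding F1dd_def Q_def E_def by simp
  have e1: "(F1d y * y - F1 y)^2 = 16 * R^2 / y^2" unfolding r using y by (simp add: field_simps power2_eq_square)
  have e2: "2 * y^2 * F1 y * F1dd y = 16 * (2*P*Q) / y^2" unfolding p q using y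
    by (simp add: field_simps power2_eq_square power3_eq_cube)
  have "16 * R^2 / y^2 < 16 * (2*P*Q) / y^2" using \<open>R^2 < 2*P*Q\<close> y
    by (intro divide_strict_right_mono) auto
  thus ?thesis using e1 e2 by simp
qed




lemma pd_local:
  fixes g :: "pt \<Rightarrow> real"
  assumes p: "p \<in> M" and eq: "\<And>q. q \<in> M \<Longrightarrow> g q = H (q$0) (q$3)"
    and dx: "((\<lambda>s. H s (p$3)) has_real_derivative Hx) (at (p$0))"
    and dt: "((\<lambda>s. H (p$0) s) has_real_derivative Ht) (at (p$3))"
  shows "pd g i p = (if i = 0 then Hx else if i = 3 then Ht else 0)"
proof -
  let ?c = "\<lambda>t::real. p + t *\<^sub>R axis i 1"
  have p3: "p$3 > 0" using p by (simp add: M_def)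
  have ev: "eventually (\<lambda>t. g (?c t) = H (?c t $ 0) (?c t $ 3)) (nhds 0)"
    unfolding eventually_nhds_metric
  proof (intro exI[of _ "p$3"] conjI allI impI)
    show "p$3 > 0" by fact
    fix t :: real assume "dist t 0 < p$3"
    hence "?c t $ 3 > 0" by (auto simp: axis_def dist_real_def)
    thus "g (?c t) = H (?c t $ 0) (?c t $ 3)" by (intro eq) (simp add: M_def)
  qed
  have d: "((\<lambda>t. H (?c t $ 0) (?c t $ 3)) has_real_derivative
      (if i = 0 then Hx else if i = 3 then Ht else 0)) (at 0)"
  proof -
    consider "i = 0" | "i = 1" | "i = 2" | "i = 3" using exhaust_4[of i] by auto
    thus ?thesis
    proof cases
      case 1
      have "((\<lambda>t. H (t + p$0) (p$3)) has_real_derivative Hx) (at 0)"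
        using dx DERIV_shift[of "\<lambda>s. H s (p$3)" Hx 0 "p$0"] by simp
      thus ?thesis using 1 by (simp add: axis_def add.commute)
    next
      case 2 thus ?thesis by (simp add: axis_def)
    next
      case 3 thus ?thesis by (simp add: axis_def)
    next
      case 4
      have "((\<lambda>t. H (p$0) (t + p$3)) has_real_derivative Ht) (at 0)"
        using dt DERIV_shift[of "\<lambda>s. H (p$0) s" Ht 0 "p$3"] by simp
      thus ?thesis using 4 by (simp add: axis_def add.commute)
    qed
  qed
  have "((\<lambda>t. g (?c t)) has_real_derivative (if i = 0 then Hx else if i = 3 then Ht else 0)) (at 0)"
    using DERIV_cong_ev[OF refl ev refl] d by simp
  thus ?thesis unfolding pd_def by (rule DERIV_imp_deriv)
qed

definition dl :: "4 \<Rightarrow> 4 \<Rightarrow> real" where "dl k i = (if i = k then 1 else 0)"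

definition Gt :: "4 \<Rightarrow> 4 \<Rightarrow> real \<Rightarrow> real \<Rightarrow> real" where
  "Gt i j s t = t * (dl 0 i * dl 0 j + dl 1 i * dl 1 j)
     + F1 t * ((dl 1 i * s - dl 2 i) * (dl 1 j * s - dl 2 j)) + 1 / F1 t * (dl 3 i * dl 3 j)"

definition Gx :: "4 \<Rightarrow> 4 \<Rightarrow> real \<Rightarrow> real \<Rightarrow> real" where
  "Gx i j s t = F1 t * (dl 1 i * (dl 1 j * s - dl 2 j) + (dl 1 i * s - dl 2 i) * dl 1 j)"

definition Gtt :: "4 \<Rightarrow> 4 \<Rightarrow> real \<Rightarrow> real \<Rightarrow> real" where
  "Gtt i j s t = (dl 0 i * dl 0 j + dl 1 i * dl 1 j)
     + F1d t * ((dl 1 i * s - dl 2 i) * (dl 1 j * s - dl 2 j)) - F1d t / (F1 t)^2 * (dl 3 i * dl 3 j)"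

lemma G_eq: "soliton_metric q $ i $ j = Gt i j (q$0) (q$3)"
  unfolding soliton_metric_def Gt_def dl_def cf_sigma_def cf_rho_def cf_zeta_def cf_dphi_def
  by (auto simp: algebra_simps)

lemma pd_G:
  assumes p: "p \<in> M"
  shows "pd (\<lambda>q. soliton_metric q $ j $ l) i p =
     (if i = 0 then Gx j l (p$0) (p$3) else if i = 3 then Gtt j l (p$0) (p$3) else 0)"
proof (rule pd_local[OF p])
  have p3: "p$3 > 0" using p by (simp add: M_def)
  show "\<And>q. q \<in> M \<Longrightarrow> soliton_metric q $ j $ l = Gt j l (q $ 0) (q $ 3)" by (rule G_eq)
  show "((\<lambda>s. Gt j l s (p $ 3)) has_real_derivative Gx j l (p $ 0) (p $ 3)) (at (p $ 0))"
    unfolding Gt_def Gx_def by (auto intro!: derivative_eq_intros simp: algebra_simps)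
  show "((\<lambda>s. Gt j l (p $ 0) s) has_real_derivative Gtt j l (p $ 0) (p $ 3)) (at (p $ 3))"
    unfolding Gt_def Gtt_def using p3 fa[OF p3]
    by (auto intro!: derivative_eq_intros simp: field_simps power2_eq_square)
qed

definition Gi :: "4 \<Rightarrow> 4 \<Rightarrow> real \<Rightarrow> real \<Rightarrow> real" where
  "Gi i j s t = 1/t * (dl 0 i * dl 0 j + dl 1 i * dl 1 j) + s/t * (dl 1 i * dl 2 j + dl 2 i * dl 1 j)
     + (1 / F1 t + s^2/t) * (dl 2 i * dl 2 j) + F1 t * (dl 3 i * dl 3 j)"

lemma two_sided_inv_unique:
  fixes A :: "real^4^4"
  assumes "A ** B = mat 1" "B ** A = mat 1"
  shows "matrix_inv A = B"
proof -
  let ?X = "matrix_inv A"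
  have "A ** ?X = mat 1 \<and> ?X ** A = mat 1"
    unfolding matrix_inv_def by (rule someI[of _ B]) (use assms in auto)
  hence "?X = ?X ** (A ** B)" "?X ** A = mat 1" using assms by (auto simp: matrix_mul_rid)
  thus ?thesis by (metis matrix_mul_assoc matrix_mul_lid)
qed

lemma Ginv_eq:
  assumes p: "q \<in> M"
  shows "matrix_inv (soliton_metric q) = (\<chi> i j. Gi i j (q$0) (q$3))"
proof (rule two_sided_inv_unique)
  have q3: "q$3 > 0" using p by (simp add: M_def)
  have F: "F1 (q$3) > 0" using fa[OF q3] .
  show "soliton_metric q ** (\<chi> i j. Gi i j (q $ 0) (q $ 3)) = mat 1"
    unfolding matrix_matrix_mult_def mat_def vec_eq_iff
    using q3 F by (simp add: G_eq forall_4 sum_4 Gt_def Gi_def dl_def field_simps power2_eq_square)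
  show "(\<chi> i j. Gi i j (q $ 0) (q $ 3)) ** soliton_metric q = mat 1"
    unfolding matrix_matrix_mult_def mat_def vec_eq_iff
    using q3 F by (simp add: G_eq forall_4 sum_4 Gt_def Gi_def dl_def field_simps power2_eq_square)
qed




definition CH :: "4 \<Rightarrow> 4 \<Rightarrow> 4 \<Rightarrow> real \<Rightarrow> real \<Rightarrow> real" where
  "CH a b c s t = (if a = 0 \<and> b = 0 \<and> c = 3 then (1/(2 * t))
    else if a = 0 \<and> b = 1 \<and> c = 1 then (- (s * (F1 t)/(t)))
    else if a = 0 \<and> b = 1 \<and> c = 2 then ((F1 t)/(2 * t))
    else if a = 0 \<and> b = 2 \<and> c = 1 then ((F1 t)/(2 * t))
    else if a = 0 \<and> b = 3 \<and> c = 0 then (1/(2 * t))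
    else if a = 1 \<and> b = 0 \<and> c = 1 then (s * (F1 t)/(2 * t))
    else if a = 1 \<and> b = 0 \<and> c = 2 then (- ((F1 t)/(2 * t)))
    else if a = 1 \<and> b = 1 \<and> c = 0 then (s * (F1 t)/(2 * t))
    else if a = 1 \<and> b = 1 \<and> c = 3 then (1/(2 * t))
    else if a = 1 \<and> b = 2 \<and> c = 0 then (- ((F1 t)/(2 * t)))
    else if a = 1 \<and> b = 3 \<and> c = 1 then (1/(2 * t))
    else if a = 2 \<and> b = 0 \<and> c = 1 then (- (1/(2)) + s^2 * (F1 t)/(2 * t))
    else if a = 2 \<and> b = 0 \<and> c = 2 then (- (s * (F1 t)/(2 * t)))
    else if a = 2 \<and> b = 1 \<and> c = 0 then (- (1/(2)) + s^2 * (F1 t)/(2 * t))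
    else if a = 2 \<and> b = 1 \<and> c = 3 then (s/(2 * t) - (s * (F1d t)/(2 * (F1 t))))
    else if a = 2 \<and> b = 2 \<and> c = 0 then (- (s * (F1 t)/(2 * t)))
    else if a = 2 \<and> b = 2 \<and> c = 3 then ((F1d t)/(2 * (F1 t)))
    else if a = 2 \<and> b = 3 \<and> c = 1 then (s/(2 * t) - (s * (F1d t)/(2 * (F1 t))))
    else if a = 2 \<and> b = 3 \<and> c = 2 then ((F1d t)/(2 * (F1 t)))
    else if a = 3 \<and> b = 0 \<and> c = 0 then (- ((F1 t)/(2)))
    else if a = 3 \<and> b = 1 \<and> c = 1 then (- ((F1 t)/(2)) - (s^2 * (F1 t) * (F1d t)/(2)))
    else if a = 3 \<and> b = 1 \<and> c = 2 then (s * (F1 t) * (F1d t)/(2))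
    else if a = 3 \<and> b = 2 \<and> c = 1 then (s * (F1 t) * (F1d t)/(2))
    else if a = 3 \<and> b = 2 \<and> c = 2 then (- ((F1 t) * (F1d t)/(2)))
    else if a = 3 \<and> b = 3 \<and> c = 3 then (- ((F1d t)/(2 * (F1 t)))) else 0)"

definition CHx :: "4 \<Rightarrow> 4 \<Rightarrow> 4 \<Rightarrow> real \<Rightarrow> real \<Rightarrow> real" where
  "CHx a b c s t = (if a = 0 \<and> b = 1 \<and> c = 1 then (- ((F1 t)/(t)))
    else if a = 1 \<and> b = 0 \<and> c = 1 then ((F1 t)/(2 * t))
    else if a = 1 \<and> b = 1 \<and> c = 0 then ((F1 t)/(2 * t))
    else if a = 2 \<and> b = 0 \<and> c = 1 then (s * (F1 t)/(t))
    else if a = 2 \<and> b = 0 \<and> c = 2 then (- ((F1 t)/(2 * t)))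
    else if a = 2 \<and> b = 1 \<and> c = 0 then (s * (F1 t)/(t))
    else if a = 2 \<and> b = 1 \<and> c = 3 then (1/(2 * t) - ((F1d t)/(2 * (F1 t))))
    else if a = 2 \<and> b = 2 \<and> c = 0 then (- ((F1 t)/(2 * t)))
    else if a = 2 \<and> b = 3 \<and> c = 1 then (1/(2 * t) - ((F1d t)/(2 * (F1 t))))
    else if a = 3 \<and> b = 1 \<and> c = 1 then (- (s * (F1 t) * (F1d t)))
    else if a = 3 \<and> b = 1 \<and> c = 2 then ((F1 t) * (F1d t)/(2))
    else if a = 3 \<and> b = 2 \<and> c = 1 then ((F1 t) * (F1d t)/(2)) else 0)"

definition CHt :: "4 \<Rightarrow> 4 \<Rightarrow> 4 \<Rightarrow> real \<Rightarrow> real \<Rightarrow> real" where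
  "CHt a b c s t = (if a = 0 \<and> b = 0 \<and> c = 3 then (- (1/(2 * t^2)))
    else if a = 0 \<and> b = 1 \<and> c = 1 then (s * (F1 t)/(t^2) - (s * (F1d t)/(t)))
    else if a = 0 \<and> b = 1 \<and> c = 2 then (- ((F1 t)/(2 * t^2)) + (F1d t)/(2 * t))
    else if a = 0 \<and> b = 2 \<and> c = 1 then (- ((F1 t)/(2 * t^2)) + (F1d t)/(2 * t))
    else if a = 0 \<and> b = 3 \<and> c = 0 then (- (1/(2 * t^2)))
    else if a = 1 \<and> b = 0 \<and> c = 1 then (- (s * (F1 t)/(2 * t^2)) + s * (F1d t)/(2 * t))
    else if a = 1 \<and> b = 0 \<and> c = 2 then ((F1 t)/(2 * t^2) - ((F1d t)/(2 * t)))
    else if a = 1 \<and> b = 1 \<and> c = 0 then (- (s * (F1 t)/(2 * t^2)) + s * (F1d t)/(2 * t))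
    else if a = 1 \<and> b = 1 \<and> c = 3 then (- (1/(2 * t^2)))
    else if a = 1 \<and> b = 2 \<and> c = 0 then ((F1 t)/(2 * t^2) - ((F1d t)/(2 * t)))
    else if a = 1 \<and> b = 3 \<and> c = 1 then (- (1/(2 * t^2)))
    else if a = 2 \<and> b = 0 \<and> c = 1 then (- (s^2 * (F1 t)/(2 * t^2)) + s^2 * (F1d t)/(2 * t))
    else if a = 2 \<and> b = 0 \<and> c = 2 then (s * (F1 t)/(2 * t^2) - (s * (F1d t)/(2 * t)))
    else if a = 2 \<and> b = 1 \<and> c = 0 then (- (s^2 * (F1 t)/(2 * t^2)) + s^2 * (F1d t)/(2 * t))
    else if a = 2 \<and> b = 1 \<and> c = 3 then (- (s/(2 * t^2)) + s * (F1d t)^2/(2 * (F1 t)^2) - (s * (F1dd t)/(2 * (F1 t))))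
    else if a = 2 \<and> b = 2 \<and> c = 0 then (s * (F1 t)/(2 * t^2) - (s * (F1d t)/(2 * t)))
    else if a = 2 \<and> b = 2 \<and> c = 3 then (- ((F1d t)^2/(2 * (F1 t)^2)) + (F1dd t)/(2 * (F1 t)))
    else if a = 2 \<and> b = 3 \<and> c = 1 then (- (s/(2 * t^2)) + s * (F1d t)^2/(2 * (F1 t)^2) - (s * (F1dd t)/(2 * (F1 t))))
    else if a = 2 \<and> b = 3 \<and> c = 2 then (- ((F1d t)^2/(2 * (F1 t)^2)) + (F1dd t)/(2 * (F1 t)))
    else if a = 3 \<and> b = 0 \<and> c = 0 then (- ((F1d t)/(2)))
    else if a = 3 \<and> b = 1 \<and> c = 1 then (- ((F1d t)/(2)) - (s^2 * (F1d t)^2/(2)) - (s^2 * (F1 t) * (F1dd t)/(2)))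
    else if a = 3 \<and> b = 1 \<and> c = 2 then (s * (F1d t)^2/(2) + s * (F1 t) * (F1dd t)/(2))
    else if a = 3 \<and> b = 2 \<and> c = 1 then (s * (F1d t)^2/(2) + s * (F1 t) * (F1dd t)/(2))
    else if a = 3 \<and> b = 2 \<and> c = 2 then (- ((F1d t)^2/(2)) - ((F1 t) * (F1dd t)/(2)))
    else if a = 3 \<and> b = 3 \<and> c = 3 then ((F1d t)^2/(2 * (F1 t)^2) - ((F1dd t)/(2 * (F1 t)))) else 0)"

lemma Chr_eq:
  assumes q: "q \<in> M"
  shows "christoffel soliton_metric q k i j = CH k i j (q$0) (q$3)"
proof -
  have q3: "q$3 > 0" using q by (simp add: M_def)
  have F: "F1 (q$3) > 0" using fa[OF q3] .
  show ?thesis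
    unfolding christoffel_def Ginv_eq[OF q] pd_G[OF q]
    using exhaust_4[of k] exhaust_4[of i] exhaust_4[of j] q3 F
    by (elim disjE) (simp_all add: sum_4 CH_def Gi_def Gx_def Gtt_def dl_def field_simps power2_eq_square)
qed




lemma CH_dx:
  assumes t: "t > 0"
  shows "((\<lambda>s. CH l j k s t) has_real_derivative CHx l j k s t) (at s)"
  using exhaust_4[of l] exhaust_4[of j] exhaust_4[of k] t fa[OF t]
  by (elim disjE) (auto simp: CH_def CHx_def intro!: derivative_eq_intros simp: field_simps power2_eq_square)

lemma CH_dt:
  assumes t: "t > 0"
  shows "((\<lambda>t. CH l j k s t) has_real_derivative CHt l j k s t) (at t)"
  using exhaust_4[of l] exhaust_4[of j] exhaust_4[of k] t fa[OF t]
  by (elim disjE) (auto simp: CH_def CHt_def intro!: derivative_eq_intros simp: field_simps power2_eq_square)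

lemma pd_Chr:
  assumes p: "p \<in> M"
  shows "pd (\<lambda>q. christoffel soliton_metric q l j k) i p =
     (if i = 0 then CHx l j k (p$0) (p$3) else if i = 3 then CHt l j k (p$0) (p$3) else 0)"
proof (rule pd_local[OF p])
  have p3: "p$3 > 0" using p by (simp add: M_def)
  show "\<And>q. q \<in> M \<Longrightarrow> christoffel soliton_metric q l j k = CH l j k (q $ 0) (q $ 3)" by (rule Chr_eq)
  show "((\<lambda>s. CH l j k s (p $ 3)) has_real_derivative CHx l j k (p $ 0) (p $ 3)) (at (p $ 0))"
    by (rule CH_dx[OF p3])
  show "((\<lambda>s. CH l j k (p $ 0) s) has_real_derivative CHt l j k (p $ 0) (p $ 3)) (at (p $ 3))"
    by (rule CH_dt[OF p3])
qed

definition RT :: "4 \<Rightarrow> 4 \<Rightarrow> 4 \<Rightarrow> 4 \<Rightarrow> real \<Rightarrow> real \<Rightarrow> real" where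
  "RT a b c d s t = (if a = 0 \<and> b = 1 \<and> c = 0 \<and> d = 1 then ((F1 t)/(t))
    else if a = 0 \<and> b = 1 \<and> c = 0 \<and> d = 2 then (5 * s * (F1 t)/(4 * t) - (s * (F1d t)/(4)))
    else if a = 0 \<and> b = 1 \<and> c = 1 \<and> d = 0 then (- ((F1 t)/(t)) + s^2 * (F1 t)^2/(4 * t^2) - (s^2 * (F1 t) * (F1d t)/(4 * t)))
    else if a = 0 \<and> b = 1 \<and> c = 1 \<and> d = 3 then (3 * s * (F1 t)^2/(4 * t) - (3 * s * (F1 t) * (F1d t)/(4)))
    else if a = 0 \<and> b = 1 \<and> c = 2 \<and> d = 0 then (- (s * (F1 t)^2/(4 * t^2)) + s * (F1 t) * (F1d t)/(4 * t))
    else if a = 0 \<and> b = 1 \<and> c = 2 \<and> d = 3 then (- ((F1 t)^2/(2 * t)) + (F1 t) * (F1d t)/(2))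
    else if a = 0 \<and> b = 1 \<and> c = 3 \<and> d = 1 then (- (s * (F1 t)/(4 * t^2)) + s * (F1d t)/(4 * t))
    else if a = 0 \<and> b = 1 \<and> c = 3 \<and> d = 2 then (1/(2 * t) - ((F1d t)/(2 * (F1 t))) - (s^2 * (F1 t)/(4 * t^2)) + s^2 * (F1d t)/(4 * t))
    else if a = 0 \<and> b = 2 \<and> c = 0 \<and> d = 2 then (- ((F1 t)/(4 * t)) + (F1d t)/(4))
    else if a = 0 \<and> b = 2 \<and> c = 1 \<and> d = 0 then (- (s * (F1 t)^2/(4 * t^2)) + s * (F1 t) * (F1d t)/(4 * t))
    else if a = 0 \<and> b = 2 \<and> c = 1 \<and> d = 3 then (- ((F1 t)^2/(4 * t)) + (F1 t) * (F1d t)/(4))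
    else if a = 0 \<and> b = 2 \<and> c = 2 \<and> d = 0 then ((F1 t)^2/(4 * t^2) - ((F1 t) * (F1d t)/(4 * t)))
    else if a = 0 \<and> b = 2 \<and> c = 3 \<and> d = 1 then ((F1 t)/(4 * t^2) - ((F1d t)/(4 * t)))
    else if a = 0 \<and> b = 2 \<and> c = 3 \<and> d = 2 then (s * (F1 t)/(4 * t^2) - (s * (F1d t)/(4 * t)))
    else if a = 0 \<and> b = 3 \<and> c = 0 \<and> d = 3 then (- ((F1 t)/(4 * t)) + (F1d t)/(4))
    else if a = 0 \<and> b = 3 \<and> c = 1 \<and> d = 1 then (s * (F1 t)/(4 * t^2) - (s * (F1d t)/(4 * t)))
    else if a = 0 \<and> b = 3 \<and> c = 1 \<and> d = 2 then (1/(4 * t) - ((F1d t)/(4 * (F1 t))) + s^2 * (F1 t)/(4 * t^2) - (s^2 * (F1d t)/(4 * t)))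
    else if a = 0 \<and> b = 3 \<and> c = 2 \<and> d = 1 then (- ((F1 t)/(4 * t^2)) + (F1d t)/(4 * t))
    else if a = 0 \<and> b = 3 \<and> c = 2 \<and> d = 2 then (- (s * (F1 t)/(4 * t^2)) + s * (F1d t)/(4 * t))
    else if a = 0 \<and> b = 3 \<and> c = 3 \<and> d = 0 then (1/(4 * t^2) - ((F1d t)/(4 * t * (F1 t))))
    else if a = 1 \<and> b = 0 \<and> c = 0 \<and> d = 1 then (- ((F1 t)/(t)))
    else if a = 1 \<and> b = 0 \<and> c = 0 \<and> d = 2 then (- (5 * s * (F1 t)/(4 * t)) + s * (F1d t)/(4))
    else if a = 1 \<and> b = 0 \<and> c = 1 \<and> d = 0 then ((F1 t)/(t) - (s^2 * (F1 t)^2/(4 * t^2)) + s^2 * (F1 t) * (F1d t)/(4 * t))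
    else if a = 1 \<and> b = 0 \<and> c = 1 \<and> d = 3 then (- (3 * s * (F1 t)^2/(4 * t)) + 3 * s * (F1 t) * (F1d t)/(4))
    else if a = 1 \<and> b = 0 \<and> c = 2 \<and> d = 0 then (s * (F1 t)^2/(4 * t^2) - (s * (F1 t) * (F1d t)/(4 * t)))
    else if a = 1 \<and> b = 0 \<and> c = 2 \<and> d = 3 then ((F1 t)^2/(2 * t) - ((F1 t) * (F1d t)/(2)))
    else if a = 1 \<and> b = 0 \<and> c = 3 \<and> d = 1 then (s * (F1 t)/(4 * t^2) - (s * (F1d t)/(4 * t)))
    else if a = 1 \<and> b = 0 \<and> c = 3 \<and> d = 2 then (- (1/(2 * t)) + (F1d t)/(2 * (F1 t)) + s^2 * (F1 t)/(4 * t^2) - (s^2 * (F1d t)/(4 * t)))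
    else if a = 1 \<and> b = 2 \<and> c = 0 \<and> d = 3 then ((F1 t)^2/(4 * t) - ((F1 t) * (F1d t)/(4)))
    else if a = 1 \<and> b = 2 \<and> c = 1 \<and> d = 1 then (- (s * (F1 t)^2/(4 * t^2)) + s * (F1 t) * (F1d t)/(4 * t))
    else if a = 1 \<and> b = 2 \<and> c = 1 \<and> d = 2 then (- ((F1 t)/(4 * t)) + (F1d t)/(4) - (s^2 * (F1 t)^2/(4 * t^2)) + s^2 * (F1 t) * (F1d t)/(4 * t))
    else if a = 1 \<and> b = 2 \<and> c = 2 \<and> d = 1 then ((F1 t)^2/(4 * t^2) - ((F1 t) * (F1d t)/(4 * t)))
    else if a = 1 \<and> b = 2 \<and> c = 2 \<and> d = 2 then (s * (F1 t)^2/(4 * t^2) - (s * (F1 t) * (F1d t)/(4 * t)))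
    else if a = 1 \<and> b = 2 \<and> c = 3 \<and> d = 0 then (- ((F1 t)/(4 * t^2)) + (F1d t)/(4 * t))
    else if a = 1 \<and> b = 3 \<and> c = 0 \<and> d = 1 then (s * (F1 t)/(2 * t^2) - (s * (F1d t)/(2 * t)))
    else if a = 1 \<and> b = 3 \<and> c = 0 \<and> d = 2 then (- (1/(4 * t)) + (F1d t)/(4 * (F1 t)) + s^2 * (F1 t)/(2 * t^2) - (s^2 * (F1d t)/(2 * t)))
    else if a = 1 \<and> b = 3 \<and> c = 1 \<and> d = 0 then (- (3 * s * (F1 t)/(4 * t^2)) + 3 * s * (F1d t)/(4 * t))
    else if a = 1 \<and> b = 3 \<and> c = 1 \<and> d = 3 then (- ((F1 t)/(4 * t)) + (F1d t)/(4) + s^2 * (F1 t) * (F1dd t)/(2))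
    else if a = 1 \<and> b = 3 \<and> c = 2 \<and> d = 0 then ((F1 t)/(4 * t^2) - ((F1d t)/(4 * t)))
    else if a = 1 \<and> b = 3 \<and> c = 2 \<and> d = 3 then (- (s * (F1 t) * (F1dd t)/(2)))
    else if a = 1 \<and> b = 3 \<and> c = 3 \<and> d = 1 then (1/(4 * t^2) - ((F1d t)/(4 * t * (F1 t))))
    else if a = 1 \<and> b = 3 \<and> c = 3 \<and> d = 2 then (s/(4 * t^2) - (s * (F1d t)/(4 * t * (F1 t))) + s * (F1dd t)/(2 * (F1 t)))
    else if a = 2 \<and> b = 0 \<and> c = 0 \<and> d = 2 then ((F1 t)/(4 * t) - ((F1d t)/(4)))
    else if a = 2 \<and> b = 0 \<and> c = 1 \<and> d = 0 then (s * (F1 t)^2/(4 * t^2) - (s * (F1 t) * (F1d t)/(4 * t)))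
    else if a = 2 \<and> b = 0 \<and> c = 1 \<and> d = 3 then ((F1 t)^2/(4 * t) - ((F1 t) * (F1d t)/(4)))
    else if a = 2 \<and> b = 0 \<and> c = 2 \<and> d = 0 then (- ((F1 t)^2/(4 * t^2)) + (F1 t) * (F1d t)/(4 * t))
    else if a = 2 \<and> b = 0 \<and> c = 3 \<and> d = 1 then (- ((F1 t)/(4 * t^2)) + (F1d t)/(4 * t))
    else if a = 2 \<and> b = 0 \<and> c = 3 \<and> d = 2 then (- (s * (F1 t)/(4 * t^2)) + s * (F1d t)/(4 * t))
    else if a = 2 \<and> b = 1 \<and> c = 0 \<and> d = 3 then (- ((F1 t)^2/(4 * t)) + (F1 t) * (F1d t)/(4))
    else if a = 2 \<and> b = 1 \<and> c = 1 \<and> d = 1 then (s * (F1 t)^2/(4 * t^2) - (s * (F1 t) * (F1d t)/(4 * t)))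
    else if a = 2 \<and> b = 1 \<and> c = 1 \<and> d = 2 then ((F1 t)/(4 * t) - ((F1d t)/(4)) + s^2 * (F1 t)^2/(4 * t^2) - (s^2 * (F1 t) * (F1d t)/(4 * t)))
    else if a = 2 \<and> b = 1 \<and> c = 2 \<and> d = 1 then (- ((F1 t)^2/(4 * t^2)) + (F1 t) * (F1d t)/(4 * t))
    else if a = 2 \<and> b = 1 \<and> c = 2 \<and> d = 2 then (- (s * (F1 t)^2/(4 * t^2)) + s * (F1 t) * (F1d t)/(4 * t))
    else if a = 2 \<and> b = 1 \<and> c = 3 \<and> d = 0 then ((F1 t)/(4 * t^2) - ((F1d t)/(4 * t)))
    else if a = 2 \<and> b = 3 \<and> c = 0 \<and> d = 1 then (- ((F1 t)/(2 * t^2)) + (F1d t)/(2 * t))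
    else if a = 2 \<and> b = 3 \<and> c = 0 \<and> d = 2 then (- (s * (F1 t)/(2 * t^2)) + s * (F1d t)/(2 * t))
    else if a = 2 \<and> b = 3 \<and> c = 1 \<and> d = 0 then ((F1 t)/(2 * t^2) - ((F1d t)/(2 * t)))
    else if a = 2 \<and> b = 3 \<and> c = 1 \<and> d = 3 then (- (s * (F1 t) * (F1dd t)/(2)))
    else if a = 2 \<and> b = 3 \<and> c = 2 \<and> d = 3 then ((F1 t) * (F1dd t)/(2))
    else if a = 2 \<and> b = 3 \<and> c = 3 \<and> d = 2 then (- ((F1dd t)/(2 * (F1 t))))
    else if a = 3 \<and> b = 0 \<and> c = 0 \<and> d = 3 then ((F1 t)/(4 * t) - ((F1d t)/(4)))
    else if a = 3 \<and> b = 0 \<and> c = 1 \<and> d = 1 then (- (s * (F1 t)/(4 * t^2)) + s * (F1d t)/(4 * t))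
    else if a = 3 \<and> b = 0 \<and> c = 1 \<and> d = 2 then (- (1/(4 * t)) + (F1d t)/(4 * (F1 t)) - (s^2 * (F1 t)/(4 * t^2)) + s^2 * (F1d t)/(4 * t))
    else if a = 3 \<and> b = 0 \<and> c = 2 \<and> d = 1 then ((F1 t)/(4 * t^2) - ((F1d t)/(4 * t)))
    else if a = 3 \<and> b = 0 \<and> c = 2 \<and> d = 2 then (s * (F1 t)/(4 * t^2) - (s * (F1d t)/(4 * t)))
    else if a = 3 \<and> b = 0 \<and> c = 3 \<and> d = 0 then (- (1/(4 * t^2)) + (F1d t)/(4 * t * (F1 t)))
    else if a = 3 \<and> b = 1 \<and> c = 0 \<and> d = 1 then (- (s * (F1 t)/(2 * t^2)) + s * (F1d t)/(2 * t))
    else if a = 3 \<and> b = 1 \<and> c = 0 \<and> d = 2 then (1/(4 * t) - ((F1d t)/(4 * (F1 t))) - (s^2 * (F1 t)/(2 * t^2)) + s^2 * (F1d t)/(2 * t))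
    else if a = 3 \<and> b = 1 \<and> c = 1 \<and> d = 0 then (3 * s * (F1 t)/(4 * t^2) - (3 * s * (F1d t)/(4 * t)))
    else if a = 3 \<and> b = 1 \<and> c = 1 \<and> d = 3 then ((F1 t)/(4 * t) - ((F1d t)/(4)) - (s^2 * (F1 t) * (F1dd t)/(2)))
    else if a = 3 \<and> b = 1 \<and> c = 2 \<and> d = 0 then (- ((F1 t)/(4 * t^2)) + (F1d t)/(4 * t))
    else if a = 3 \<and> b = 1 \<and> c = 2 \<and> d = 3 then (s * (F1 t) * (F1dd t)/(2))
    else if a = 3 \<and> b = 1 \<and> c = 3 \<and> d = 1 then (- (1/(4 * t^2)) + (F1d t)/(4 * t * (F1 t)))
    else if a = 3 \<and> b = 1 \<and> c = 3 \<and> d = 2 then (- (s/(4 * t^2)) + s * (F1d t)/(4 * t * (F1 t)) - (s * (F1dd t)/(2 * (F1 t))))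
    else if a = 3 \<and> b = 2 \<and> c = 0 \<and> d = 1 then ((F1 t)/(2 * t^2) - ((F1d t)/(2 * t)))
    else if a = 3 \<and> b = 2 \<and> c = 0 \<and> d = 2 then (s * (F1 t)/(2 * t^2) - (s * (F1d t)/(2 * t)))
    else if a = 3 \<and> b = 2 \<and> c = 1 \<and> d = 0 then (- ((F1 t)/(2 * t^2)) + (F1d t)/(2 * t))
    else if a = 3 \<and> b = 2 \<and> c = 1 \<and> d = 3 then (s * (F1 t) * (F1dd t)/(2))
    else if a = 3 \<and> b = 2 \<and> c = 2 \<and> d = 3 then (- ((F1 t) * (F1dd t)/(2)))
    else if a = 3 \<and> b = 2 \<and> c = 3 \<and> d = 2 then ((F1dd t)/(2 * (F1 t))) else 0)"

lemma riem_eq: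
  assumes p: "p \<in> M"
  shows "riem soliton_metric p i j k l = RT i j k l (p$0) (p$3)"
proof -
  have p3: "p$3 > 0" using p by (simp add: M_def)
  have F: "F1 (p$3) > 0" using fa[OF p3] .
  show ?thesis
    unfolding riem_def pd_Chr[OF p] Chr_eq[OF p]
    using exhaust_4[of i] exhaust_4[of j] exhaust_4[of k] exhaust_4[of l] p3 F
    by (elim disjE) (simp_all add: sum_4 CH_def CHx_def CHt_def RT_def field_simps power2_eq_square)
qed




definition RLg :: "4 \<Rightarrow> 4 \<Rightarrow> 4 \<Rightarrow> 4 \<Rightarrow> real \<Rightarrow> real \<Rightarrow> real \<Rightarrow> real \<Rightarrow> real \<Rightarrow> real \<Rightarrow> real \<Rightarrow> real" where
  "RLg a b c d s t FF Fd Fdd it iF = (if a = 0 \<and> b = 1 \<and> c = 0 \<and> d = 1 then (FF - (s^2 * FF^2 * it / 4) + s^2 * FF * Fd / 4)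
    else if a = 0 \<and> b = 1 \<and> c = 0 \<and> d = 2 then (s * FF^2 * it / 4 - (s * FF * Fd / 4))
    else if a = 0 \<and> b = 1 \<and> c = 1 \<and> d = 0 then (- (FF) + s^2 * FF^2 * it / 4 - (s^2 * FF * Fd / 4))
    else if a = 0 \<and> b = 1 \<and> c = 1 \<and> d = 3 then (3 * s * FF * it / 4 - (3 * s * Fd / 4))
    else if a = 0 \<and> b = 1 \<and> c = 2 \<and> d = 0 then (- (s * FF^2 * it / 4) + s * FF * Fd / 4)
    else if a = 0 \<and> b = 1 \<and> c = 2 \<and> d = 3 then (- (FF * it / 2) + Fd / 2)
    else if a = 0 \<and> b = 1 \<and> c = 3 \<and> d = 1 then (- (3 * s * FF * it / 4) + 3 * s * Fd / 4)
    else if a = 0 \<and> b = 1 \<and> c = 3 \<and> d = 2 then (FF * it / 2 - (Fd / 2))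
    else if a = 0 \<and> b = 2 \<and> c = 0 \<and> d = 1 then (s * FF^2 * it / 4 - (s * FF * Fd / 4))
    else if a = 0 \<and> b = 2 \<and> c = 0 \<and> d = 2 then (- (FF^2 * it / 4) + FF * Fd / 4)
    else if a = 0 \<and> b = 2 \<and> c = 1 \<and> d = 0 then (- (s * FF^2 * it / 4) + s * FF * Fd / 4)
    else if a = 0 \<and> b = 2 \<and> c = 1 \<and> d = 3 then (- (FF * it / 4) + Fd / 4)
    else if a = 0 \<and> b = 2 \<and> c = 2 \<and> d = 0 then (FF^2 * it / 4 - (FF * Fd / 4))
    else if a = 0 \<and> b = 2 \<and> c = 3 \<and> d = 1 then (FF * it / 4 - (Fd / 4))
    else if a = 0 \<and> b = 3 \<and> c = 0 \<and> d = 3 then (- (it / 4) + Fd * iF / 4)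
    else if a = 0 \<and> b = 3 \<and> c = 1 \<and> d = 2 then (FF * it / 4 - (Fd / 4))
    else if a = 0 \<and> b = 3 \<and> c = 2 \<and> d = 1 then (- (FF * it / 4) + Fd / 4)
    else if a = 0 \<and> b = 3 \<and> c = 3 \<and> d = 0 then (it / 4 - (Fd * iF / 4))
    else if a = 1 \<and> b = 0 \<and> c = 0 \<and> d = 1 then (- (FF) + s^2 * FF^2 * it / 4 - (s^2 * FF * Fd / 4))
    else if a = 1 \<and> b = 0 \<and> c = 0 \<and> d = 2 then (- (s * FF^2 * it / 4) + s * FF * Fd / 4)
    else if a = 1 \<and> b = 0 \<and> c = 1 \<and> d = 0 then (FF - (s^2 * FF^2 * it / 4) + s^2 * FF * Fd / 4)
    else if a = 1 \<and> b = 0 \<and> c = 1 \<and> d = 3 then (- (3 * s * FF * it / 4) + 3 * s * Fd / 4)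
    else if a = 1 \<and> b = 0 \<and> c = 2 \<and> d = 0 then (s * FF^2 * it / 4 - (s * FF * Fd / 4))
    else if a = 1 \<and> b = 0 \<and> c = 2 \<and> d = 3 then (FF * it / 2 - (Fd / 2))
    else if a = 1 \<and> b = 0 \<and> c = 3 \<and> d = 1 then (3 * s * FF * it / 4 - (3 * s * Fd / 4))
    else if a = 1 \<and> b = 0 \<and> c = 3 \<and> d = 2 then (- (FF * it / 2) + Fd / 2)
    else if a = 1 \<and> b = 2 \<and> c = 0 \<and> d = 3 then (FF * it / 4 - (Fd / 4))
    else if a = 1 \<and> b = 2 \<and> c = 1 \<and> d = 2 then (- (FF^2 * it / 4) + FF * Fd / 4)
    else if a = 1 \<and> b = 2 \<and> c = 2 \<and> d = 1 then (FF^2 * it / 4 - (FF * Fd / 4))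
    else if a = 1 \<and> b = 2 \<and> c = 3 \<and> d = 0 then (- (FF * it / 4) + Fd / 4)
    else if a = 1 \<and> b = 3 \<and> c = 0 \<and> d = 1 then (3 * s * FF * it / 4 - (3 * s * Fd / 4))
    else if a = 1 \<and> b = 3 \<and> c = 0 \<and> d = 2 then (- (FF * it / 4) + Fd / 4)
    else if a = 1 \<and> b = 3 \<and> c = 1 \<and> d = 0 then (- (3 * s * FF * it / 4) + 3 * s * Fd / 4)
    else if a = 1 \<and> b = 3 \<and> c = 1 \<and> d = 3 then (- (it / 4) + Fd * iF / 4 + s^2 * Fdd / 2)
    else if a = 1 \<and> b = 3 \<and> c = 2 \<and> d = 0 then (FF * it / 4 - (Fd / 4))
    else if a = 1 \<and> b = 3 \<and> c = 2 \<and> d = 3 then (- (s * Fdd / 2))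
    else if a = 1 \<and> b = 3 \<and> c = 3 \<and> d = 1 then (it / 4 - (Fd * iF / 4) - (s^2 * Fdd / 2))
    else if a = 1 \<and> b = 3 \<and> c = 3 \<and> d = 2 then (s * Fdd / 2)
    else if a = 2 \<and> b = 0 \<and> c = 0 \<and> d = 1 then (- (s * FF^2 * it / 4) + s * FF * Fd / 4)
    else if a = 2 \<and> b = 0 \<and> c = 0 \<and> d = 2 then (FF^2 * it / 4 - (FF * Fd / 4))
    else if a = 2 \<and> b = 0 \<and> c = 1 \<and> d = 0 then (s * FF^2 * it / 4 - (s * FF * Fd / 4))
    else if a = 2 \<and> b = 0 \<and> c = 1 \<and> d = 3 then (FF * it / 4 - (Fd / 4))
    else if a = 2 \<and> b = 0 \<and> c = 2 \<and> d = 0 then (- (FF^2 * it / 4) + FF * Fd / 4)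
    else if a = 2 \<and> b = 0 \<and> c = 3 \<and> d = 1 then (- (FF * it / 4) + Fd / 4)
    else if a = 2 \<and> b = 1 \<and> c = 0 \<and> d = 3 then (- (FF * it / 4) + Fd / 4)
    else if a = 2 \<and> b = 1 \<and> c = 1 \<and> d = 2 then (FF^2 * it / 4 - (FF * Fd / 4))
    else if a = 2 \<and> b = 1 \<and> c = 2 \<and> d = 1 then (- (FF^2 * it / 4) + FF * Fd / 4)
    else if a = 2 \<and> b = 1 \<and> c = 3 \<and> d = 0 then (FF * it / 4 - (Fd / 4))
    else if a = 2 \<and> b = 3 \<and> c = 0 \<and> d = 1 then (- (FF * it / 2) + Fd / 2)
    else if a = 2 \<and> b = 3 \<and> c = 1 \<and> d = 0 then (FF * it / 2 - (Fd / 2))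
    else if a = 2 \<and> b = 3 \<and> c = 1 \<and> d = 3 then (- (s * Fdd / 2))
    else if a = 2 \<and> b = 3 \<and> c = 2 \<and> d = 3 then (Fdd / 2)
    else if a = 2 \<and> b = 3 \<and> c = 3 \<and> d = 1 then (s * Fdd / 2)
    else if a = 2 \<and> b = 3 \<and> c = 3 \<and> d = 2 then (- (Fdd / 2))
    else if a = 3 \<and> b = 0 \<and> c = 0 \<and> d = 3 then (it / 4 - (Fd * iF / 4))
    else if a = 3 \<and> b = 0 \<and> c = 1 \<and> d = 2 then (- (FF * it / 4) + Fd / 4)
    else if a = 3 \<and> b = 0 \<and> c = 2 \<and> d = 1 then (FF * it / 4 - (Fd / 4))
    else if a = 3 \<and> b = 0 \<and> c = 3 \<and> d = 0 then (- (it / 4) + Fd * iF / 4)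
    else if a = 3 \<and> b = 1 \<and> c = 0 \<and> d = 1 then (- (3 * s * FF * it / 4) + 3 * s * Fd / 4)
    else if a = 3 \<and> b = 1 \<and> c = 0 \<and> d = 2 then (FF * it / 4 - (Fd / 4))
    else if a = 3 \<and> b = 1 \<and> c = 1 \<and> d = 0 then (3 * s * FF * it / 4 - (3 * s * Fd / 4))
    else if a = 3 \<and> b = 1 \<and> c = 1 \<and> d = 3 then (it / 4 - (Fd * iF / 4) - (s^2 * Fdd / 2))
    else if a = 3 \<and> b = 1 \<and> c = 2 \<and> d = 0 then (- (FF * it / 4) + Fd / 4)
    else if a = 3 \<and> b = 1 \<and> c = 2 \<and> d = 3 then (s * Fdd / 2)
    else if a = 3 \<and> b = 1 \<and> c = 3 \<and> d = 1 then (- (it / 4) + Fd * iF / 4 + s^2 * Fdd / 2)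
    else if a = 3 \<and> b = 1 \<and> c = 3 \<and> d = 2 then (- (s * Fdd / 2))
    else if a = 3 \<and> b = 2 \<and> c = 0 \<and> d = 1 then (FF * it / 2 - (Fd / 2))
    else if a = 3 \<and> b = 2 \<and> c = 1 \<and> d = 0 then (- (FF * it / 2) + Fd / 2)
    else if a = 3 \<and> b = 2 \<and> c = 1 \<and> d = 3 then (s * Fdd / 2)
    else if a = 3 \<and> b = 2 \<and> c = 2 \<and> d = 3 then (- (Fdd / 2))
    else if a = 3 \<and> b = 2 \<and> c = 3 \<and> d = 1 then (- (s * Fdd / 2))
    else if a = 3 \<and> b = 2 \<and> c = 3 \<and> d = 2 then (Fdd / 2) else 0)"


definition RL :: "4 \<Rightarrow> 4 \<Rightarrow> 4 \<Rightarrow> 4 \<Rightarrow> real \<Rightarrow> real \<Rightarrow> real" where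
  "RL a b c d s t = RLg a b c d s t (F1 t) (F1d t) (F1dd t) (1 / t) (1 / F1 t)"

lemma RL_eq:
  assumes t: "t > 0"
  shows "(\<Sum>l\<in>UNIV. RT i j k l s t * Gt l m s t) = RL i j k m s t"
  using exhaust_4[of i] exhaust_4[of j] exhaust_4[of k] exhaust_4[of m] t fa[OF t]
  by (elim disjE) (simp_all add: sum_4 RT_def Gt_def dl_def RL_def RLg_def field_simps power2_eq_square)




definition NUMm :: "real \<Rightarrow> real \<Rightarrow> real \<Rightarrow> real \<Rightarrow> real \<Rightarrow> real^4 \<Rightarrow> real^4 \<Rightarrow> real" where
  "NUMm x f F F' F'' u v =
    - 4 * F^2 * (f * (u$0 * v$1 - u$1 * v$0))^2
    - 2 * f^2 * F * F'' * ((x * u$1 - u$2) * v$3 - u$3 * (x * v$1 - v$2))^2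
    + 4 * F * (F' * f - F) * (f * (u$0 * v$1 - u$1 * v$0)) * ((x * u$1 - u$2) * v$3 - u$3 * (x * v$1 - v$2))
    - (F' * f - F) * (f * F^2 * (u$0 * (x * v$1 - v$2) - (x * u$1 - u$2) * v$0)^2 + f * (u$0 * v$3 - u$3 * v$0)^2
        + f * F^2 * (u$1 * (x * v$1 - v$2) - (x * u$1 - u$2) * v$1)^2 + f * (u$1 * v$3 - u$3 * v$1)^2)
    + 2 * F * (F' * f - F) * f * ((u$0 * (x * v$1 - v$2) - (x * u$1 - u$2) * v$0) * (u$1 * v$3 - u$3 * v$1)
        - (u$0 * v$3 - u$3 * v$0) * (u$1 * (x * v$1 - v$2) - (x * u$1 - u$2) * v$1))"


lemma four_eq: "(4::4) = 0" by simp

lemma polyid2: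
  assumes "t * it = 1" "FF * iF = 1"
  shows "4 * t^2 * FF * (\<Sum>i\<in>UNIV. \<Sum>j\<in>UNIV. \<Sum>k\<in>UNIV. \<Sum>m\<in>UNIV. u$i * v$j * v$k * u$m * RLg i j k m x t FF Fd Fdd it iF)
     = NUMm x t FF Fd Fdd u v"
  unfolding NUMm_def
  apply (simp add: sum_4 RLg_def four_eq)
  using assms by algebra


lemma rearr:
  fixes u v :: "real^4" and R :: "4 \<Rightarrow> 4 \<Rightarrow> 4 \<Rightarrow> 4 \<Rightarrow> real" and G :: "4 \<Rightarrow> 4 \<Rightarrow> real"
  shows "(\<Sum>i\<in>UNIV. \<Sum>j\<in>UNIV. \<Sum>k\<in>UNIV. \<Sum>l\<in>UNIV. \<Sum>m\<in>UNIV. u$i * v$j * v$k * R i j k l * G l m * u$m)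
     = (\<Sum>i\<in>UNIV. \<Sum>j\<in>UNIV. \<Sum>k\<in>UNIV. \<Sum>m\<in>UNIV. u$i * v$j * v$k * u$m * (\<Sum>l\<in>UNIV. R i j k l * G l m))"
proof -
  have "\<And>i j k. (\<Sum>l\<in>UNIV. \<Sum>m\<in>UNIV. u$i * v$j * v$k * R i j k l * G l m * u$m)
     = (\<Sum>m\<in>UNIV. u$i * v$j * v$k * u$m * (\<Sum>l\<in>UNIV. R i j k l * G l m))"
    by (subst sum.swap) (simp add: sum_distrib_left mult_ac)
  thus ?thesis by simp
qed

definition Sg :: "real \<Rightarrow> real \<Rightarrow> real^4 \<Rightarrow> real^4 \<Rightarrow> real" where
  "Sg x f u v = (f * (u$0 * v$1 - u$1 * v$0))^2 + ((x * u$1 - u$2) * v$3 - u$3 * (x * v$1 - v$2))^2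
     + f * F1 f * (u$0 * (x * v$1 - v$2) - (x * u$1 - u$2) * v$0)^2 + f / F1 f * (u$0 * v$3 - u$3 * v$0)^2
     + f * F1 f * (u$1 * (x * v$1 - v$2) - (x * u$1 - u$2) * v$1)^2 + f / F1 f * (u$1 * v$3 - u$3 * v$1)^2"

lemma gram_eq:
  assumes p: "p \<in> M"
  shows "gprod soliton_metric p u u * gprod soliton_metric p v v - (gprod soliton_metric p u v)^2
     = Sg (p$0) (p$3) u v"
proof -
  have p3: "p$3 > 0" using p by (simp add: M_def)
  have F: "F1 (p$3) > 0" using fa[OF p3] .
  define iF where "iF = 1 / F1 (p$3)"
  have h: "F1 (p$3) * iF = 1" using F unfolding iF_def by simp
  have e: "1 / F1 (p$3) = iF" unfolding iF_def ..
  have e2: "\<And>z. z / F1 (p$3) = z * iF" unfolding iF_def by simp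
  show ?thesis
    unfolding gprod_def G_eq Sg_def
    apply (simp add: sum_4 Gt_def dl_def four_eq e e2)
    using h by algebra
qed

lemma num_eq:
  assumes p: "p \<in> M"
  shows "(\<Sum>i\<in>UNIV. \<Sum>j\<in>UNIV. \<Sum>k\<in>UNIV. \<Sum>l\<in>UNIV. \<Sum>m\<in>UNIV.
        u $ i * v $ j * v $ k * riem soliton_metric p i j k l * soliton_metric p $ l $ m * u $ m)
     = NUMm (p$0) (p$3) (F1 (p$3)) (F1d (p$3)) (F1dd (p$3)) u v / (4 * (p$3)^2 * F1 (p$3))"
proof -
  have p3: "p$3 > 0" using p by (simp add: M_def)
  have "(\<Sum>i\<in>UNIV. \<Sum>j\<in>UNIV. \<Sum>k\<in>UNIV. \<Sum>l\<in>UNIV. \<Sum>m\<in>UNIV.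
        u $ i * v $ j * v $ k * riem soliton_metric p i j k l * soliton_metric p $ l $ m * u $ m)
     = (\<Sum>i\<in>UNIV. \<Sum>j\<in>UNIV. \<Sum>k\<in>UNIV. \<Sum>m\<in>UNIV. u$i * v$j * v$k * u$m *
          (\<Sum>l\<in>UNIV. RT i j k l (p$0) (p$3) * Gt l m (p$0) (p$3)))"
    unfolding riem_eq[OF p] G_eq by (rule rearr)
  also have "\<dots> = (\<Sum>i\<in>UNIV. \<Sum>j\<in>UNIV. \<Sum>k\<in>UNIV. \<Sum>m\<in>UNIV. u$i * v$j * v$k * u$m *
          RLg i j k m (p$0) (p$3) (F1 (p$3)) (F1d (p$3)) (F1dd (p$3)) (1 / p$3) (1 / F1 (p$3)))"
    unfolding RL_eq[OF p3] RL_def ..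
  also have "\<dots> = NUMm (p$0) (p$3) (F1 (p$3)) (F1d (p$3)) (F1dd (p$3)) u v / (4 * (p$3)^2 * F1 (p$3))"
  proof -
    have F: "F1 (p$3) > 0" using fa[OF p3] .
    have h: "4 * (p$3)^2 * F1 (p$3) * (\<Sum>i\<in>UNIV. \<Sum>j\<in>UNIV. \<Sum>k\<in>UNIV. \<Sum>m\<in>UNIV. u$i * v$j * v$k * u$m *
          RLg i j k m (p$0) (p$3) (F1 (p$3)) (F1d (p$3)) (F1dd (p$3)) (1 / p$3) (1 / F1 (p$3)))
       = NUMm (p$0) (p$3) (F1 (p$3)) (F1d (p$3)) (F1dd (p$3)) u v"
      by (rule polyid2) (use p3 F in auto)
    show ?thesis using p3 F by (simp add: h[symmetric])
  qed
  finally show ?thesis .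
qed




lemma amgm2:
  fixes f F m n :: real
  assumes f: "f > 0" and F: "F > 0"
  shows "2 * f * \<bar>m * n\<bar> \<le> f * F * m^2 + f / F * n^2"
proof -
  have "f * F * m^2 + f / F * n^2 - 2 * f * \<bar>m * n\<bar> = f / F * (F * \<bar>m\<bar> - \<bar>n\<bar>)^2"
    using F by (simp add: field_simps power2_eq_square abs_mult)
  moreover have "f / F * (F * \<bar>m\<bar> - \<bar>n\<bar>)^2 \<ge> 0" using f F by simp
  ultimately show ?thesis by linarith
qed



lemma quad_neg:
  fixes A B D a b :: real
  assumes A: "A < 0" and B: "B < 0" and AB: "4 * D^2 < A * B" and ab: "a \<noteq> 0 \<or> b \<noteq> 0"
  shows "A * a^2 + B * b^2 + 4 * D * (\<bar>a\<bar> * \<bar>b\<bar>) < 0"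
proof -
  define \<alpha> where "\<alpha> = - A"
  define \<beta> where "\<beta> = - B"
  have al: "\<alpha> > 0" using A unfolding \<alpha>_def by simp
  have id: "\<alpha> * (\<alpha> * a^2 + \<beta> * b^2 - 4 * D * (\<bar>a\<bar> * \<bar>b\<bar>)) = (\<alpha> * \<bar>a\<bar> - 2 * D * \<bar>b\<bar>)^2 + (\<alpha> * \<beta> - 4 * D^2) * b^2"
    by (simp add: algebra_simps power2_eq_square)
  have gt: "\<alpha> * \<beta> - 4 * D^2 > 0" using AB unfolding \<alpha>_def \<beta>_def by simp
  have "(\<alpha> * \<bar>a\<bar> - 2 * D * \<bar>b\<bar>)^2 + (\<alpha> * \<beta> - 4 * D^2) * b^2 > 0"
  proof (cases "b = 0")
    case True
    with ab have "a \<noteq> 0" by simp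
    thus ?thesis using True al by simp
  next
    case False
    hence "(\<alpha> * \<beta> - 4 * D^2) * b^2 > 0" using gt by simp
    thus ?thesis by (smt (verit) zero_le_power2)
  qed
  hence "\<alpha> * (\<alpha> * a^2 + \<beta> * b^2 - 4 * D * (\<bar>a\<bar> * \<bar>b\<bar>)) > 0" using id by simp
  hence "\<alpha> * a^2 + \<beta> * b^2 - 4 * D * (\<bar>a\<bar> * \<bar>b\<bar>) > 0" using al by (simp add: zero_less_mult_iff)
  thus ?thesis unfolding \<alpha>_def \<beta>_def by simp
qed



lemma key:
  fixes f F A B D a b m0w m03 m1w m13 s :: real
  assumes f: "f > 0" and F: "F > 0" and A: "A < 0" and B: "B < 0" and AB: "4 * D^2 < A * B"
    and D: "D > 0" and A2: "A > -(2/3)" and B2: "B > -(2/3)" and D6: "D \<le> 1/6"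
    and pl: "a * b = f * (m0w * m13 - m03 * m1w)"
    and s: "s = f * F * m0w^2 + f / F * m03^2 + f * F * m1w^2 + f / F * m13^2"
    and S: "a^2 + b^2 + s > 0"
  shows "-(2/3) * (a^2 + b^2 + s) < A * a^2 + B * b^2 + 4 * D * a * b - D * s + 2 * D * (f * (m0w * m13 - m03 * m1w))
     \<and> A * a^2 + B * b^2 + 4 * D * a * b - D * s + 2 * D * (f * (m0w * m13 - m03 * m1w)) < 0"
proof -
  have h1: "2 * f * \<bar>m0w * m13\<bar> \<le> f * F * m0w^2 + f / F * m13^2" by (rule amgm2[OF f F])
  have h2: "2 * f * \<bar>m1w * m03\<bar> \<le> f * F * m1w^2 + f / F * m03^2" by (rule amgm2[OF f F])
  have h3: "\<bar>a * b\<bar> \<le> f * \<bar>m0w * m13\<bar> + f * \<bar>m1w * m03\<bar>"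
  proof -
    have "\<bar>m0w * m13 - m03 * m1w\<bar> \<le> \<bar>m0w * m13\<bar> + \<bar>m03 * m1w\<bar>" by (rule abs_triangle_ineq4)
    hence "f * \<bar>m0w * m13 - m03 * m1w\<bar> \<le> f * (\<bar>m0w * m13\<bar> + \<bar>m03 * m1w\<bar>)"
      using f by (intro mult_left_mono) auto
    moreover have "\<bar>a * b\<bar> = f * \<bar>m0w * m13 - m03 * m1w\<bar>" unfolding pl using f by (simp add: abs_mult)
    moreover have "\<bar>m03 * m1w\<bar> = \<bar>m1w * m03\<bar>" by (simp add: mult.commute)
    ultimately show ?thesis by (simp add: distrib_left)
  qed
  have s2: "s \<ge> 2 * (\<bar>a\<bar> * \<bar>b\<bar>)" using h1 h2 h3 s by (simp add: abs_mult)
  have N: "A * a^2 + B * b^2 + 4 * D * a * b - D * s + 2 * D * (f * (m0w * m13 - m03 * m1w))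
      = A * a^2 + B * b^2 + 6 * D * (a * b) - D * s" unfolding pl[symmetric] by (simp add: algebra_simps)
  have abt: "\<bar>a * b\<bar> = \<bar>a\<bar> * \<bar>b\<bar>" by (simp add: abs_mult)
  have ab1: "a * b \<le> \<bar>a\<bar> * \<bar>b\<bar>" "- (\<bar>a\<bar> * \<bar>b\<bar>) \<le> a * b"
    using abs_ge_self[of "a*b"] abs_ge_minus_self[of "a*b"] abt by linarith+
  show ?thesis
  proof (cases "a = 0 \<and> b = 0")
    case True
    hence "s > 0" using S by simp
    thus ?thesis unfolding N using True D D6 by simp
  next
    case False
    hence ne: "a \<noteq> 0 \<or> b \<noteq> 0" by simp
    have q: "A * a^2 + B * b^2 + 4 * D * (\<bar>a\<bar> * \<bar>b\<bar>) < 0" by (rule quad_neg[OF A B AB ne])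
    have up: "A * a^2 + B * b^2 + 6 * D * (a * b) - D * s \<le> A * a^2 + B * b^2 + 4 * D * (\<bar>a\<bar> * \<bar>b\<bar>)"
    proof -
      have "6 * D * (a * b) \<le> 6 * D * (\<bar>a\<bar> * \<bar>b\<bar>)" by (rule mult_left_mono[OF ab1(1)]) (use D in simp)
      moreover have "D * (2 * (\<bar>a\<bar> * \<bar>b\<bar>)) \<le> D * s" using s2 D by (simp add: mult_left_mono)
      ultimately show ?thesis by linarith
    qed
    have pos: "(A + 2/3) * a^2 + (B + 2/3) * b^2 + (4/3 - 8 * D) * (\<bar>a\<bar> * \<bar>b\<bar>) > 0"
    proof -
      have "(A + 2/3) * a^2 + (B + 2/3) * b^2 > 0"
      proof (cases "a = 0")
        case True
        hence "b \<noteq> 0" using ne by simp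
        thus ?thesis using True B2 by simp
      next
        case False
        hence "(A + 2/3) * a^2 > 0" using A2 by simp
        moreover have "(B + 2/3) * b^2 \<ge> 0" using B2 by simp
        ultimately show ?thesis by linarith
      qed
      moreover have "(4/3 - 8 * D) * (\<bar>a\<bar> * \<bar>b\<bar>) \<ge> 0" using D6 by simp
      ultimately show ?thesis by linarith
    qed
    have lo: "(A + 2/3) * a^2 + (B + 2/3) * b^2 + (4/3 - 8 * D) * (\<bar>a\<bar> * \<bar>b\<bar>)
        \<le> A * a^2 + B * b^2 + 6 * D * (a * b) - D * s + 2/3 * (a^2 + b^2 + s)"
    proof -
      have "6 * D * (- (\<bar>a\<bar> * \<bar>b\<bar>)) \<le> 6 * D * (a * b)" by (rule mult_left_mono[OF ab1(2)]) (use D in simp)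
      moreover have "(2/3 - D) * (2 * (\<bar>a\<bar> * \<bar>b\<bar>)) \<le> (2/3 - D) * s" using s2 D6 by (simp add: mult_left_mono)
      ultimately show ?thesis by (simp add: algebra_simps)
    qed
    show ?thesis unfolding N using up q lo pos by linarith
  qed
qed




lemma not_plane_pair:
  fixes u v :: "real^4" and x :: real
  assumes m01: "u$0* v$1 - u$1* v$0 = 0" and mb: "(x* u$1 - u$2)* v$3 - u$3* (x* v$1 - v$2) = 0"
    and m0w: "u$0* (x* v$1 - v$2) - (x* u$1 - u$2)* v$0 = 0" and m03: "u$0* v$3 - u$3* v$0 = 0"
    and m1w: "u$1* (x* v$1 - v$2) - (x* u$1 - u$2)* v$1 = 0" and m13: "u$1* v$3 - u$3* v$1 = 0"
  shows "\<not> plane_pair u v"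
proof
  assume pp: "plane_pair u v"
  hence uv: "u \<noteq> v" and ind: "independent {u, v}" unfolding plane_pair_def by auto
  have u0: "u \<noteq> 0" using ind dependent_zero[of "{u,v}"] by auto
  have "\<exists>c. v = c *\<^sub>R u"
  proof (cases "u$0 = 0")
    case False
    show ?thesis
    proof (intro exI[of _ "v$0 / u$0"])
      show "v = (v$0 / u$0) *\<^sub>R u"
        unfolding vec_eq_iff forall_4 four_eq using False m01 m0w m03
        by ((simp add: field_simps); (simp add: algebra_simps)?)
    qed
  next
    case z0: True
    show ?thesis
    proof (cases "u$1 = 0")
      case False
      show ?thesis
      proof (intro exI[of _ "v$1 / u$1"])
        show "v = (v$1 / u$1) *\<^sub>R u"
          unfolding vec_eq_iff forall_4 four_eq using False z0 m01 m1w m13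
          by ((simp add: field_simps); (simp add: algebra_simps)?)
      qed
    next
      case z1: True
      show ?thesis
      proof (cases "u$2 = 0")
        case False
        show ?thesis
        proof (intro exI[of _ "v$2 / u$2"])
          show "v = (v$2 / u$2) *\<^sub>R u"
            unfolding vec_eq_iff forall_4 four_eq using False z0 z1 m0w m1w mb
            by ((simp add: field_simps); (simp add: algebra_simps)?)
        qed
      next
        case z2: True
        have "u$3 \<noteq> 0"
        proof
          assume "u$3 = 0"
          hence "u = 0" using z0 z1 z2 unfolding vec_eq_iff forall_4 four_eq by simp
          thus False using u0 by simp
        qed
        show ?thesis
        proof (intro exI[of _ "v$3 / u$3"])
          show "v = (v$3 / u$3) *\<^sub>R u"
            unfolding vec_eq_iff forall_4 four_eq using \<open>u$3 \<noteq> 0\<close> z0 z1 z2 m03 m13 mb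
            by ((simp add: field_simps); (simp add: algebra_simps)?)
        qed
      qed
    qed
  qed
  then obtain c where c: "v = c *\<^sub>R u" by blast
  have "v \<in> span {u}" unfolding c by (simp add: span_base span_mul)
  hence "dependent {u, v}" unfolding dependent_def using uv
    by (intro bexI[of _ v]) (auto simp: insert_Diff_if)
  thus False using ind by simp
qed



definition aa :: "real \<Rightarrow> real \<Rightarrow> real^4 \<Rightarrow> real^4 \<Rightarrow> real" where
  "aa x f u v = f * (u$0 * v$1 - u$1 * v$0)"
definition bb :: "real \<Rightarrow> real \<Rightarrow> real^4 \<Rightarrow> real^4 \<Rightarrow> real" where
  "bb x f u v = (x * u$1 - u$2) * v$3 - u$3 * (x * v$1 - v$2)"
definition n0w :: "real \<Rightarrow> real^4 \<Rightarrow> real^4 \<Rightarrow> real" where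
  "n0w x u v = u$0 * (x * v$1 - v$2) - (x * u$1 - u$2) * v$0"
definition n03 :: "real^4 \<Rightarrow> real^4 \<Rightarrow> real" where
  "n03 u v = u$0 * v$3 - u$3 * v$0"
definition n1w :: "real \<Rightarrow> real^4 \<Rightarrow> real^4 \<Rightarrow> real" where
  "n1w x u v = u$1 * (x * v$1 - v$2) - (x * u$1 - u$2) * v$1"
definition n13 :: "real^4 \<Rightarrow> real^4 \<Rightarrow> real" where
  "n13 u v = u$1 * v$3 - u$3 * v$1"
definition ss :: "real \<Rightarrow> real \<Rightarrow> real^4 \<Rightarrow> real^4 \<Rightarrow> real" where
  "ss x f u v = f * F1 f * (n0w x u v)^2 + f / F1 f * (n03 u v)^2 + f * F1 f * (n1w x u v)^2 + f / F1 f * (n13 u v)^2"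
definition cA :: "real \<Rightarrow> real" where "cA f = - F1 f / f^2"
definition cB :: "real \<Rightarrow> real" where "cB f = - F1dd f / 2"
definition cD :: "real \<Rightarrow> real" where "cD f = (F1d f * f - F1 f) / (4 * f^2)"
definition Nv :: "real \<Rightarrow> real \<Rightarrow> real^4 \<Rightarrow> real^4 \<Rightarrow> real" where
  "Nv x f u v = cA f * (aa x f u v)^2 + cB f * (bb x f u v)^2 + 4 * cD f * aa x f u v * bb x f u v
     - cD f * ss x f u v + 2 * cD f * (f * (n0w x u v * n13 u v - n03 u v * n1w x u v))"

lemma plucker: "aa x f u v * bb x f u v = f * (n0w x u v * n13 u v - n03 u v * n1w x u v)"
  unfolding aa_def bb_def n0w_def n13_def n03_def n1w_def by algebra

lemma sec_NS:
  assumes p: "p \<in> M"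
  shows "sec_curv soliton_metric p u v = Nv (p$0) (p$3) u v / ((aa (p$0) (p$3) u v)^2 + (bb (p$0) (p$3) u v)^2 + ss (p$0) (p$3) u v)"
proof -
  have f: "p$3 > 0" using p by (simp add: M_def)
  have F: "F1 (p$3) > 0" using fa[OF f] .
  define i1 where "i1 = 1 / p$3"
  define i2 where "i2 = 1 / F1 (p$3)"
  have h1: "p$3 * i1 = 1" using f unfolding i1_def by simp
  have h2: "F1 (p$3) * i2 = 1" using F unfolding i2_def by simp
  have e1: "\<And>z. z / F1 (p$3) = z * i2" unfolding i2_def by simp
  have e2: "\<And>z. z / (p$3)^2 = z * i1^2" unfolding i1_def by (simp add: power2_eq_square)
  have e3: "\<And>z. z / (4 * (p$3)^2) = z * i1^2 / 4" unfolding i1_def by (simp add: power2_eq_square)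
  have n: "NUMm (p$0) (p$3) (F1 (p$3)) (F1d (p$3)) (F1dd (p$3)) u v = 4 * (p$3)^2 * F1 (p$3) * Nv (p$0) (p$3) u v"
    unfolding NUMm_def Nv_def cA_def cB_def cD_def aa_def bb_def ss_def n0w_def n03_def n1w_def n13_def
    unfolding e1 e2 e3 using h1 h2 by algebra
  have g: "Sg (p$0) (p$3) u v = (aa (p$0) (p$3) u v)^2 + (bb (p$0) (p$3) u v)^2 + ss (p$0) (p$3) u v"
    unfolding Sg_def aa_def bb_def ss_def n0w_def n03_def n1w_def n13_def by simp
  show ?thesis unfolding sec_curv_def num_eq[OF p] gram_eq[OF p] n g using f F by simp
qed

lemma S_pos:
  assumes f: "f > 0" and pp: "plane_pair u v"
  shows "(aa x f u v)^2 + (bb x f u v)^2 + ss x f u v > 0"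
proof -
  have F: "F1 f > 0" using fa[OF f] .
  have t1: "f * F1 f * (n0w x u v)^2 \<ge> 0" "f / F1 f * (n03 u v)^2 \<ge> 0"
    "f * F1 f * (n1w x u v)^2 \<ge> 0" "f / F1 f * (n13 u v)^2 \<ge> 0" using f F by auto
  have ne: "(aa x f u v)^2 + (bb x f u v)^2 + ss x f u v \<noteq> 0"
  proof
    assume z: "(aa x f u v)^2 + (bb x f u v)^2 + ss x f u v = 0"
    have sq: "(aa x f u v)^2 \<ge> 0" "(bb x f u v)^2 \<ge> 0" by auto
    have "(aa x f u v)^2 = 0" "(bb x f u v)^2 = 0" "f * F1 f * (n0w x u v)^2 = 0" "f / F1 f * (n03 u v)^2 = 0"
      "f * F1 f * (n1w x u v)^2 = 0" "f / F1 f * (n13 u v)^2 = 0"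
      using z t1 sq unfolding ss_def by linarith+
    hence "aa x f u v = 0" "bb x f u v = 0" "n0w x u v = 0" "n03 u v = 0" "n1w x u v = 0" "n13 u v = 0"
      using f F by auto
    hence "\<not> plane_pair u v" unfolding aa_def bb_def n0w_def n03_def n1w_def n13_def using f
      by (intro not_plane_pair[of u v x]) auto
    thus False using pp by simp
  qed
  have "(aa x f u v)^2 + (bb x f u v)^2 + ss x f u v \<ge> 0" using t1 unfolding ss_def by simp
  thus ?thesis using ne by simp
qed

lemma sec_bounds:
  assumes p: "p \<in> M" and pp: "plane_pair u v"
  shows "-(2/3) < sec_curv soliton_metric p u v \<and> sec_curv soliton_metric p u v < 0"
proof -
  define x where "x = p$0"
  define f where "f = p$3"
  have f: "f > 0" using p by (simp add: M_def f_def)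
  have F: "F1 f > 0" using fa[OF f] .
  have A: "cA f < 0" unfolding cA_def using F f by simp
  have A2: "cA f > -(2/3)" unfolding cA_def using fb[OF f] f by (simp add: field_simps)
  have B: "cB f < 0" unfolding cB_def using fc[OF f] by simp
  have B2: "cB f > -(2/3)" unfolding cB_def using fd[OF f] by simp
  have D: "cD f > 0" unfolding cD_def using fe[OF f] f by simp
  have D6: "cD f \<le> 1/6" unfolding cD_def using ff[OF f] f by (simp add: field_simps)
  have AB: "4 * (cD f)^2 < cA f * cB f"
  proof -
    have "4 * (cD f)^2 = (F1d f * f - F1 f)^2 / (4 * f^4)" unfolding cD_def using f
      by (simp add: field_simps power2_eq_square power4_eq_xxxx)
    also have "\<dots> < (2 * f^2 * F1 f * F1dd f) / (4 * f^4)" using fg[OF f] f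
      by (intro divide_strict_right_mono) auto
    also have "\<dots> = cA f * cB f" unfolding cA_def cB_def using f
      by (simp add: field_simps power2_eq_square power4_eq_xxxx)
    finally show ?thesis .
  qed
  have S: "(aa x f u v)^2 + (bb x f u v)^2 + ss x f u v > 0" by (rule S_pos[OF f pp])
  have k: "-(2/3) * ((aa x f u v)^2 + (bb x f u v)^2 + ss x f u v) < Nv x f u v \<and> Nv x f u v < 0"
    unfolding Nv_def
    by (rule key[OF f F A B AB D A2 B2 D6 plucker ss_def S])
  have sec: "sec_curv soliton_metric p u v = Nv x f u v / ((aa x f u v)^2 + (bb x f u v)^2 + ss x f u v)"
    unfolding x_def f_def by (rule sec_NS[OF p])
  show ?thesis unfolding sec using k S by (simp add: divide_neg_pos less_divide_eq)
qed


definition ptE :: "real \<Rightarrow> pt" where "ptE e = (\<chi> i. if i = 3 then e else 0)"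

lemma ptE_M: "e > 0 \<Longrightarrow> ptE e \<in> M" unfolding M_def ptE_def by simp

lemma ptE_comp: "ptE e $ 0 = 0" "ptE e $ 3 = e" unfolding ptE_def by simp_all

lemma pp_ax: "i \<noteq> j \<Longrightarrow> plane_pair (axis i (1::real)) (axis j 1)"
proof -
  assume ij: "i \<noteq> j"
  have "independent {axis i (1::real), axis j 1}"
    by (rule independent_mono[OF independent_Basis]) auto
  thus ?thesis using ij unfolding plane_pair_def by (auto simp: axis_eq_axis)
qed

lemma val1:
  assumes e: "e > 0"
  shows "sec_curv soliton_metric (ptE e) (axis 0 1) (axis 1 1) = cA e"
proof -
  have "sec_curv soliton_metric (ptE e) (axis 0 1) (axis 1 1)
      = Nv 0 e (axis 0 1) (axis 1 1) / ((aa 0 e (axis 0 1) (axis 1 1))^2 + (bb 0 e (axis 0 1) (axis 1 1))^2 + ss 0 e (axis 0 1) (axis 1 1))"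
    using sec_NS[OF ptE_M[OF e]] by (simp add: ptE_comp)
  also have "\<dots> = cA e" using e
    by (simp add: Nv_def aa_def bb_def ss_def n0w_def n03_def n1w_def n13_def axis_def power2_eq_square)
  finally show ?thesis .
qed

lemma val2:
  assumes e: "e > 0"
  shows "sec_curv soliton_metric (ptE e) (axis 0 1) (axis 2 1) = - cD e"
proof -
  have F: "F1 e > 0" using fa[OF e] .
  have "sec_curv soliton_metric (ptE e) (axis 0 1) (axis 2 1)
      = Nv 0 e (axis 0 1) (axis 2 1) / ((aa 0 e (axis 0 1) (axis 2 1))^2 + (bb 0 e (axis 0 1) (axis 2 1))^2 + ss 0 e (axis 0 1) (axis 2 1))"
    using sec_NS[OF ptE_M[OF e]] by (simp add: ptE_comp)
  also have "\<dots> = - cD e" using e F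
    by (simp add: Nv_def aa_def bb_def ss_def n0w_def n03_def n1w_def n13_def axis_def power2_eq_square)
  finally show ?thesis .
qed

theorem mainTheorem10:
  shows "(\<forall>p\<in>M. \<forall>u v. plane_pair u v \<longrightarrow>
            - (2/3) < sec_curv soliton_metric p u v \<and> sec_curv soliton_metric p u v < 0)
       \<and> Inf {sec_curv soliton_metric p u v | p u v. p \<in> M \<and> plane_pair u v} = - (2/3)
       \<and> Sup {sec_curv soliton_metric p u v | p u v. p \<in> M \<and> plane_pair u v} = 0"
proof -
  let ?X = "{sec_curv soliton_metric p u v | p u v. p \<in> M \<and> plane_pair u v}"
  have P1: "\<forall>p\<in>M. \<forall>u v. plane_pair u v \<longrightarrow>
            - (2/3) < sec_curv soliton_metric p u v \<and> sec_curv soliton_metric p u v < 0"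
    using sec_bounds by blast
  have mem1: "\<And>e. e > 0 \<Longrightarrow> cA e \<in> ?X"
  proof -
    fix e :: real assume e: "e > 0"
    show "cA e \<in> ?X"
      using val1[OF e] ptE_M[OF e] pp_ax[of 0 1] by (intro CollectI exI[of _ "ptE e"] exI[of _ "axis 0 1"] exI[of _ "axis 1 1"]) auto
  qed
  have mem2: "\<And>e. e > 0 \<Longrightarrow> - cD e \<in> ?X"
  proof -
    fix e :: real assume e: "e > 0"
    show "- cD e \<in> ?X"
      using val2[OF e] ptE_M[OF e] pp_ax[of 0 2] by (intro CollectI exI[of _ "ptE e"] exI[of _ "axis 0 1"] exI[of _ "axis 2 1"]) auto
  qed
  have ne: "?X \<noteq> {}" using mem1[of 1] by auto
  have lb: "\<And>z. z \<in> ?X \<Longrightarrow> - (2/3) \<le> z" using P1 by fastforce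
  have ub: "\<And>z. z \<in> ?X \<Longrightarrow> z \<le> 0" using P1 by fastforce
  have I: "Inf ?X = - (2/3)"
  proof (rule cInf_eq_non_empty[OF ne lb])
    fix y :: real assume y: "\<And>z. z \<in> ?X \<Longrightarrow> y \<le> z"
    show "y \<le> - (2/3)"
    proof (rule ccontr)
      assume "\<not> y \<le> - (2/3)"
      hence e: "y + 2/3 > 0" by simp
      define e where "e = y + 2/3"
      have e0: "e > 0" using e unfolding e_def .
      have "cA e < - (2/3) + e/6"
        using fh[OF e0] e0 unfolding cA_def by (simp add: field_simps power2_eq_square power3_eq_cube)
      moreover have "-(2/3) + e/6 = y/6 - 5/9" unfolding e_def by (simp add: field_simps)
      moreover have "y \<le> cA e" using y mem1[OF e0] by blast
      ultimately show False using e by linarith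
    qed
  qed
  have S: "Sup ?X = 0"
  proof (rule cSup_eq_non_empty[OF ne ub])
    fix y :: real assume y: "\<And>z. z \<in> ?X \<Longrightarrow> z \<le> y"
    show "0 \<le> y"
    proof (rule ccontr)
      assume "\<not> 0 \<le> y"
      hence yn: "y < 0" by simp
      define e where "e = 1 + 2 / (- y)"
      have q: "2 / (- y) > 0" using yn by simp
      have e1: "e \<ge> 1" "e > 2 / (- y)" using q unfolding e_def by auto
      have e0: "e > 0" using e1 by simp
      have "cD e \<le> 8 / (4 * e^2)" unfolding cD_def using fs[OF e0] e0
        by (intro divide_right_mono) auto
      also have "\<dots> = 2 / e^2" by simp
      also have "\<dots> \<le> 2 / e" using e1 e0 by (simp add: power2_eq_square field_simps)
      also have "\<dots> < - y"
      proof -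
        have "2 < e * (- y)" using e1(2) yn by (simp add: field_simps)
        thus ?thesis using e0 by (simp add: field_simps)
      qed
      finally have "- cD e > y" by simp
      moreover have "- cD e \<le> y" using y mem2[OF e0] by blast
      ultimately show False by simp
    qed
  qed
  show ?thesis using P1 I S by blast
qed


end
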